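(* Consider the state-dependent DMC with causal CSI at the transmitter described in the context. For every $R_K\geq 0$ and $B\geq 0$, the covert capacity with causal CSI satisfies $$C_{\mathrm{c}}\geq \max I(V;Y),$$ where the maximum is over PMFs $P_V$ on a finite set $\mathcal{V}$ with $|\mathcal{V}|\leq \min\{|\mathcal{X}|+|\mathcal{Y}|+|\mathcal{Z}|-1,\ (|\mathcal{X}|-1)\cdot|\mathcal{S}|+2\}$ and functions $x:\mathcal{V}\times\mathcal{S}\to\mathcal{X}$, evaluated under the joint distribution $P_S(s)P_V(v)\mathbbm{1}\{x=x(v,s)\}P_{Y,Z|S,X}(y,z|s,x)$, subject to $P_Z=Q_0$, $\mathrm{E}[b(X)]\leq B$, and $I(V;Z)-I(V;Y)<R_K$.
   Context: A state-dependent discrete memoryless channel consists of finite alphabets $\mathcal{X}$ (input), $\mathcal{S}$ (state), $\mathcal{Y}$ (receiver output), $\mathcal{Z}$ (warden output), a state PMF $P_S$, and a channel law $P_{Y,Z|S,X}$. Over $n$ uses, the state sequence $S^n$ is IID $\sim P_S$, and given $(X^n,S^n)$ the pairs $(Y_i,Z_i)$ are conditionally independent with law $P_{Y,Z|S,X}(\cdot,\cdot|S_i,X_i)$. A designated "no input" symbol $x_0\in\mathcal{X}$ is fixed, and $Q_0(z)=\sum_{s}P_S(s)P_{Z|S,X}(z|s,x_0)$; $Q_0^{\times n}$ is its $n$-fold product. It is assumed that $\mathrm{supp}(Q_0)=\mathcal{Z}$. A cost function $b:\mathcal{X}\to[0,\infty)$ is given, with $b(x^n)=\frac1n\sum_{i=1}^n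 b(x_i)$. A secret key $K$ uniform on $[1:2^{nR_K}]$ and a message $M$ uniform on $[1:2^{nR}]$ are mutually independent and independent of $S^n$; $K$ is known to transmitter and receiver, while $S^n$ is known only to the transmitter. With causal CSI, an $(2^{nR},2^{nR_K},n)$ code consists of an encoder producing $X_i$ as a function of $(M,K,S^i)$ (and possibly private randomness of the transmitter independent of $(M,K,S^n)$), $i\in[1:n]$, and a decoder mapping $(Y^n,K)$ to $\hat M$. With noncausal CSI, the encoder produces $X^n$ from $(M,K,S^n)$ (and possibly such private randomness). $P_e^{(n)}=P(\hat M\neq M)$, and $\widehat{P}_{Z^n}$ is the distribution of the warden's output $Z^n$ induced by the code. A rate $R$ is achievable (for given $R_K,B$) if there is a sequence of codes with $\limsup_{n}\mathrm{E}[b(X^n)]\leq B$, $P_e^{(n)}\to 0$, and $D(\widehat{P}_{Z^n}\|Q_0^{\times n})\to 0$. The covert capacity $C_{\mathrm{c}}$ (causal CSI) resp. $C_{\mathrm{nc}}$ (noncausal CSI) is the supremum of achievable rates. *)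

theory Defs
  imports Complex_Main "HOL-Library.Extended_Real" "HOL-Library.Liminf_Limsup"
begin

text \<open>Finite alphabets are finite types: 'x input, 's state, 'y receiver output,
  'z warden output.  The channel law is W s x y z = P_{Y,Z|S,X}(y,z|s,x).\<close>

definition is_pmf :: "('a \<Rightarrow> real) \<Rightarrow> 'a set \<Rightarrow> bool" where
  "is_pmf p A \<longleftrightarrow> finite A \<and> (\<forall>a\<in>A. p a \<ge> 0) \<and> (\<Sum>a\<in>A. p a) = 1"

definition is_channel ::
  "('s::finite \<Rightarrow> 'x::finite \<Rightarrow> 'y::finite \<Rightarrow> 'z::finite \<Rightarrow> real) \<Rightarrow> bool" where
  "is_channel W \<longleftrightarrow> (\<forall>s x y z. W s x y z \<ge> 0) \<and>
     (\<forall>s x. (\<Sum>y\<in>UNIV. \<Sum>z\<in>UNIV. W s x y z) = 1)"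

definition WY :: "('s \<Rightarrow> 'x \<Rightarrow> 'y \<Rightarrow> 'z::finite \<Rightarrow> real) \<Rightarrow> 's \<Rightarrow> 'x \<Rightarrow> 'y \<Rightarrow> real" where
  "WY W s x y = (\<Sum>z\<in>UNIV. W s x y z)"

definition WZ :: "('s \<Rightarrow> 'x \<Rightarrow> 'y::finite \<Rightarrow> 'z \<Rightarrow> real) \<Rightarrow> 's \<Rightarrow> 'x \<Rightarrow> 'z \<Rightarrow> real" where
  "WZ W s x z = (\<Sum>y\<in>UNIV. W s x y z)"

text \<open>No-input output distribution of the warden: Q_0(z) = sum_s P_S(s) P_{Z|S,X}(z|s,x_0).\<close>
definition Q0 :: "('s::finite \<Rightarrow> real) \<Rightarrow> ('s \<Rightarrow> 'x \<Rightarrow> 'y::finite \<Rightarrow> 'z \<Rightarrow> real) \<Rightarrow> 'x \<Rightarrow> 'z \<Rightarrow> real" where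
  "Q0 PS W x0 z = (\<Sum>s\<in>UNIV. PS s * WZ W s x0 z)"

definition seqs :: "nat \<Rightarrow> 'a list set" where
  "seqs n = {xs. length xs = n}"

definition prodn :: "nat \<Rightarrow> ('a \<Rightarrow> real) \<Rightarrow> 'a list \<Rightarrow> real" where
  "prodn n p xs = (\<Prod>i<n. p (xs ! i))"

definition rel_entropy :: "'a set \<Rightarrow> ('a \<Rightarrow> real) \<Rightarrow> ('a \<Rightarrow> real) \<Rightarrow> real" where
  "rel_entropy A P Q = (\<Sum>a\<in>A. if P a = 0 then 0 else P a * log 2 (P a / Q a))"

definition mutual_info :: "'a set \<Rightarrow> 'b set \<Rightarrow> ('a \<Rightarrow> 'b \<Rightarrow> real) \<Rightarrow> real" where
  "mutual_info A B p =
     (\<Sum>a\<in>A. \<Sum>b\<in>B. if p a b = 0 then 0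
        else p a b * log 2 (p a b / ((\<Sum>b'\<in>B. p a b') * (\<Sum>a'\<in>A. p a' b))))"

definition num_msgs :: "nat \<Rightarrow> real \<Rightarrow> nat" where
  "num_msgs n R = nat \<lceil>2 powr (real n * R)\<rceil>"

definition num_keys :: "nat \<Rightarrow> real \<Rightarrow> nat" where
  "num_keys n RK = nat \<lfloor>2 powr (real n * RK)\<rfloor>"

text \<open>The transmitter's private randomness is U in
  {0..<rand_size} with PMF rand_pmf (independent of M, K, S^n).  The encoder
  produces X_i = enc u i m k (S^i) (time index i from 0, S^i = first i+1 states);
  the decoder maps (Y^n, K) to the message estimate.  Messages are m in
  {0..<num_msgs n R}, keys k in {0..<num_keys n RK}.\<close>
record ('s, 'x, 'y) causal_code =
  rand_size :: nat
  rand_pmf :: "nat \<Rightarrow> real"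
  enc :: "nat \<Rightarrow> nat \<Rightarrow> nat \<Rightarrow> nat \<Rightarrow> 's list \<Rightarrow> 'x"
  dec :: "'y list \<Rightarrow> nat \<Rightarrow> nat"

definition code_ok :: "('s, 'x, 'y) causal_code \<Rightarrow> bool" where
  "code_ok c \<longleftrightarrow> is_pmf (rand_pmf c) {0..<rand_size c}"

definition cinput :: "('s, 'x, 'y) causal_code \<Rightarrow> nat \<Rightarrow> nat \<Rightarrow> nat \<Rightarrow> nat \<Rightarrow> 's list \<Rightarrow> 'x list" where
  "cinput c n u m k s = map (\<lambda>i. enc c u i m k (take (Suc i) s)) [0..<n]"

definition cweight :: "('s \<Rightarrow> real) \<Rightarrow> ('s, 'x, 'y) causal_code \<Rightarrow> nat \<Rightarrow> nat \<Rightarrow> nat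
     \<Rightarrow> nat \<Rightarrow> nat \<Rightarrow> nat \<Rightarrow> 's list \<Rightarrow> real" where
  "cweight PS c n Mn Kn u m k s = rand_pmf c u * prodn n PS s / (real Mn * real Kn)"

definition err_prob :: "('s::finite \<Rightarrow> real) \<Rightarrow> ('s \<Rightarrow> 'x \<Rightarrow> 'y::finite \<Rightarrow> 'z::finite \<Rightarrow> real)
     \<Rightarrow> nat \<Rightarrow> real \<Rightarrow> real \<Rightarrow> ('s, 'x, 'y) causal_code \<Rightarrow> real" where
  "err_prob PS W n R RK c =
    (let Mn = num_msgs n R; Kn = num_keys n RK in
     \<Sum>m<Mn. \<Sum>k<Kn. \<Sum>u<rand_size c. \<Sum>s\<in>seqs n.
       cweight PS c n Mn Kn u m k s *
       (\<Sum>y\<in>seqs n. (\<Prod>i<n. WY W (s ! i) (cinput c n u m k s ! i) (y ! i)) *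
           (if dec c y k \<noteq> m then 1 else 0)))"

definition exp_cost :: "('s::finite \<Rightarrow> real) \<Rightarrow> ('x \<Rightarrow> real)
     \<Rightarrow> nat \<Rightarrow> real \<Rightarrow> real \<Rightarrow> ('s, 'x, 'y) causal_code \<Rightarrow> real" where
  "exp_cost PS b n R RK c =
    (let Mn = num_msgs n R; Kn = num_keys n RK in
     \<Sum>m<Mn. \<Sum>k<Kn. \<Sum>u<rand_size c. \<Sum>s\<in>seqs n.
       cweight PS c n Mn Kn u m k s *
       ((\<Sum>i<n. b (cinput c n u m k s ! i)) / real n))"

definition warden_dist :: "('s::finite \<Rightarrow> real) \<Rightarrow> ('s \<Rightarrow> 'x \<Rightarrow> 'y::finite \<Rightarrow> 'z \<Rightarrow> real)
     \<Rightarrow> nat \<Rightarrow> real \<Rightarrow> real \<Rightarrow> ('s, 'x, 'y) causal_code \<Rightarrow> 'z list \<Rightarrow> real" where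
  "warden_dist PS W n R RK c zs =
    (let Mn = num_msgs n R; Kn = num_keys n RK in
     \<Sum>m<Mn. \<Sum>k<Kn. \<Sum>u<rand_size c. \<Sum>s\<in>seqs n.
       cweight PS c n Mn Kn u m k s *
       (\<Prod>i<n. WZ W (s ! i) (cinput c n u m k s ! i) (zs ! i)))"

definition achievable_causal ::
  "('s::finite \<Rightarrow> real) \<Rightarrow> ('s \<Rightarrow> 'x::finite \<Rightarrow> 'y::finite \<Rightarrow> 'z::finite \<Rightarrow> real) \<Rightarrow> 'x
     \<Rightarrow> ('x \<Rightarrow> real) \<Rightarrow> real \<Rightarrow> real \<Rightarrow> real \<Rightarrow> bool" where
  "achievable_causal PS W x0 b RK B R \<longleftrightarrow>
    (\<exists>C :: nat \<Rightarrow> ('s, 'x, 'y) causal_code.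
       (\<forall>n. code_ok (C n)) \<and>
       limsup (\<lambda>n. ereal (exp_cost PS b n R RK (C n))) \<le> ereal B \<and>
       (\<lambda>n. err_prob PS W n R RK (C n)) \<longlonglongrightarrow> 0 \<and>
       (\<lambda>n. rel_entropy (seqs n) (warden_dist PS W n R RK (C n))
                 (prodn n (Q0 PS W x0))) \<longlonglongrightarrow> 0)"

definition covert_capacity_causal ::
  "('s::finite \<Rightarrow> real) \<Rightarrow> ('s \<Rightarrow> 'x::finite \<Rightarrow> 'y::finite \<Rightarrow> 'z::finite \<Rightarrow> real) \<Rightarrow> 'x
     \<Rightarrow> ('x \<Rightarrow> real) \<Rightarrow> real \<Rightarrow> real \<Rightarrow> ereal" where
  "covert_capacity_causal PS W x0 b RK B =
     Sup (ereal ` {R. achievable_causal PS W x0 b RK B R})"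

text \<open>Single-letter joint laws for (V,Y) and (V,Z) induced by
  P_S(s) P_V(v) 1{x = xf v s} P_{Y,Z|S,X}(y,z|s,x).\<close>
definition PVY :: "('s::finite \<Rightarrow> real) \<Rightarrow> ('s \<Rightarrow> 'x \<Rightarrow> 'y \<Rightarrow> 'z::finite \<Rightarrow> real)
     \<Rightarrow> ('v \<Rightarrow> real) \<Rightarrow> ('v \<Rightarrow> 's \<Rightarrow> 'x) \<Rightarrow> 'v \<Rightarrow> 'y \<Rightarrow> real" where
  "PVY PS W PV xf v y = (\<Sum>s\<in>UNIV. PS s * PV v * WY W s (xf v s) y)"

definition PVZ :: "('s::finite \<Rightarrow> real) \<Rightarrow> ('s \<Rightarrow> 'x \<Rightarrow> 'y::finite \<Rightarrow> 'z \<Rightarrow> real)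
     \<Rightarrow> ('v \<Rightarrow> real) \<Rightarrow> ('v \<Rightarrow> 's \<Rightarrow> 'x) \<Rightarrow> 'v \<Rightarrow> 'z \<Rightarrow> real" where
  "PVZ PS W PV xf v z = (\<Sum>s\<in>UNIV. PS s * PV v * WZ W s (xf v s) z)"

end

theory Submission
  imports Defs
begin


definition lset :: "'a set \<Rightarrow> nat \<Rightarrow> 'a list set" where
  "lset A n = {xs. length xs = n \<and> set xs \<subseteq> A}"

lemma finite_lset: "finite A \<Longrightarrow> finite (lset A n)"
  using finite_lists_length_eq[of A n] unfolding lset_def by (simp add: conj_commute)

lemma lset_Suc: "lset A (Suc n) = (\<lambda>(a,xs). a#xs) ` (A \<times> lset A n)"
  unfolding lset_def by (auto simp: length_Suc_conv image_iff)

lemma seqs_lset: "seqs n = lset UNIV n"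
  unfolding seqs_def lset_def by auto

lemma sum_prod_lset:
  fixes f :: "nat \<Rightarrow> 'a \<Rightarrow> 'b::comm_semiring_1"
  assumes "finite A"
  shows "(\<Sum>xs\<in>lset A n. \<Prod>i<n. f i (xs!i)) = (\<Prod>i<n. \<Sum>a\<in>A. f i a)"
  using assms
proof (induction n arbitrary: f)
  case 0
  have "lset A 0 = {[]}" by (auto simp: lset_def)
  then show ?case by simp
next
  case (Suc n)
  have inj: "inj_on (\<lambda>(a,xs). a#xs) (A \<times> lset A n)" by (auto simp: inj_on_def)
  have "(\<Sum>xs\<in>lset A (Suc n). \<Prod>i<Suc n. f i (xs!i))
      = (\<Sum>(a,xs)\<in>A \<times> lset A n. \<Prod>i<Suc n. f i ((a#xs)!i))"
    unfolding lset_Suc by (subst sum.reindex[OF inj]) (simp add: case_prod_beta)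
  also have "\<dots> = (\<Sum>(a,xs)\<in>A \<times> lset A n. f 0 a * (\<Prod>i<n. f (Suc i) (xs!i)))"
    by (simp add: prod.lessThan_Suc_shift del: prod.lessThan_Suc)
  also have "\<dots> = (\<Sum>a\<in>A. f 0 a * (\<Sum>xs\<in>lset A n. \<Prod>i<n. f (Suc i) (xs!i)))"
    by (simp add: sum.cartesian_product[symmetric] sum_distrib_left)
  also have "\<dots> = (\<Sum>a\<in>A. f 0 a) * (\<Prod>i<n. \<Sum>a\<in>A. f (Suc i) a)"
    using Suc.IH[of "\<lambda>i. f (Suc i)", OF Suc.prems] by (simp add: sum_distrib_right)
  also have "\<dots> = (\<Prod>i<Suc n. \<Sum>a\<in>A. f i a)"
    by (simp add: prod.lessThan_Suc_shift del: prod.lessThan_Suc)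
  finally show ?case .
qed

lemma prod_if_one:
  fixes g h :: "nat \<Rightarrow> 'b::comm_monoid_mult"
  assumes "j < N"
  shows "(\<Prod>i<N. if i = j then g i else h i) = g j * (\<Prod>i\<in>{..<N}-{j}. h i)"
proof -
  have "(\<Prod>i<N. if i = j then g i else h i) = (if j = j then g j else h j) * (\<Prod>i\<in>{..<N}-{j}. if i = j then g i else h i)"
    using assms by (subst prod.remove[of _ j]) auto
  also have "(\<Prod>i\<in>{..<N}-{j}. if i = j then g i else h i) = (\<Prod>i\<in>{..<N}-{j}. h i)"
    by (rule prod.cong) auto
  finally show ?thesis by simp
qed

lemma exp_one:
  fixes p :: "'a \<Rightarrow> real"
  assumes A: "finite A" and j: "j < N" and p1: "sum p A = 1"
  shows "(\<Sum>xs\<in>lset A N. (\<Prod>i<N. p (xs!i)) * \<phi> (xs!j)) = (\<Sum>a\<in>A. p a * \<phi> a)"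
proof -
  let ?f = "\<lambda>i a. if i = j then p a * \<phi> a else p a"
  have "(\<Sum>xs\<in>lset A N. (\<Prod>i<N. p (xs!i)) * \<phi> (xs!j)) = (\<Sum>xs\<in>lset A N. \<Prod>i<N. ?f i (xs!i))"
  proof (rule sum.cong[OF refl])
    fix xs
    have "(\<Prod>i<N. ?f i (xs!i)) = p (xs!j) * \<phi> (xs!j) * (\<Prod>i\<in>{..<N}-{j}. p (xs!i))"
      using prod_if_one[OF j, of "\<lambda>i. p (xs!i) * \<phi> (xs!i)" "\<lambda>i. p (xs!i)"]
      by (simp add: if_distrib cong: if_cong)
    moreover have "(\<Prod>i<N. p (xs!i)) = p (xs!j) * (\<Prod>i\<in>{..<N}-{j}. p (xs!i))"
      using j by (subst prod.remove[of _ j]) auto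
    ultimately show "(\<Prod>i<N. p (xs!i)) * \<phi> (xs!j) = (\<Prod>i<N. ?f i (xs!i))" by simp
  qed
  also have "\<dots> = (\<Prod>i<N. sum (?f i) A)" by (rule sum_prod_lset[OF A])
  also have "\<dots> = sum (?f j) A * (\<Prod>i\<in>{..<N}-{j}. sum (?f i) A)"
    using j by (subst prod.remove[of _ j]) auto
  also have "(\<Prod>i\<in>{..<N}-{j}. sum (?f i) A) = 1"
    using p1 by (intro prod.neutral) auto
  finally show ?thesis by simp
qed

lemma exp_all:
  fixes p :: "'a \<Rightarrow> real"
  assumes A: "finite A" and p1: "sum p A = 1"
  shows "(\<Sum>xs\<in>lset A N. (\<Prod>i<N. p (xs!i))) = 1"
  using sum_prod_lset[OF A, where n=N and f="\<lambda>i. p"] p1 by simp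

lemma exp_two:
  fixes p :: "'a \<Rightarrow> real"
  assumes A: "finite A" and j: "j < N" and j': "j' < N" and jj: "j \<noteq> j'" and p1: "sum p A = 1"
  shows "(\<Sum>xs\<in>lset A N. (\<Prod>i<N. p (xs!i)) * \<phi> (xs!j) * \<psi> (xs!j')) = (\<Sum>a\<in>A. p a * \<phi> a) * (\<Sum>a\<in>A. p a * \<psi> a)"
proof -
  let ?f = "\<lambda>i a. if i = j then p a * \<phi> a else if i = j' then p a * \<psi> a else p a"
  have j'm: "j' \<in> {..<N} - {j}" using j' jj by auto
  have "(\<Sum>xs\<in>lset A N. (\<Prod>i<N. p (xs!i)) * \<phi> (xs!j) * \<psi> (xs!j')) = (\<Sum>xs\<in>lset A N. \<Prod>i<N. ?f i (xs!i))"
  proof (rule sum.cong[OF refl])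
    fix xs
    have "(\<Prod>i<N. ?f i (xs!i)) = p (xs!j) * \<phi> (xs!j) * (\<Prod>i\<in>{..<N}-{j}. if i = j' then p (xs!i) * \<psi> (xs!i) else p (xs!i))"
      using prod_if_one[OF j, of "\<lambda>i. p (xs!i) * \<phi> (xs!i)" "\<lambda>i. if i = j' then p (xs!i) * \<psi> (xs!i) else p (xs!i)"]
      by (simp add: if_distrib cong: if_cong)
    also have "(\<Prod>i\<in>{..<N}-{j}. if i = j' then p (xs!i) * \<psi> (xs!i) else p (xs!i))
        = p (xs!j') * \<psi> (xs!j') * (\<Prod>i\<in>{..<N}-{j}-{j'}. p (xs!i))"
      using j'm by (subst prod.remove[of _ j']) (auto intro!: prod.cong)
    finally have 1: "(\<Prod>i<N. ?f i (xs!i)) = p (xs!j) * \<phi> (xs!j) * (p (xs!j') * \<psi> (xs!j') * (\<Prod>i\<in>{..<N}-{j}-{j'}. p (xs!i)))" .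
    have "(\<Prod>i<N. p (xs!i)) = p (xs!j) * (p (xs!j') * (\<Prod>i\<in>{..<N}-{j}-{j'}. p (xs!i)))"
      using j j'm by (subst prod.remove[of _ j], simp, simp) (subst prod.remove[of _ j'], auto)
    with 1 show "(\<Prod>i<N. p (xs!i)) * \<phi> (xs!j) * \<psi> (xs!j') = (\<Prod>i<N. ?f i (xs!i))"
      by (simp add: ac_simps)
  qed
  also have "\<dots> = (\<Prod>i<N. sum (?f i) A)" by (rule sum_prod_lset[OF A])
  also have "\<dots> = sum (?f j) A * (\<Prod>i\<in>{..<N}-{j}. sum (?f i) A)"
    using j by (subst prod.remove[of _ j]) auto
  also have "(\<Prod>i\<in>{..<N}-{j}. sum (?f i) A) = sum (?f j') A * (\<Prod>i\<in>{..<N}-{j}-{j'}. sum (?f i) A)"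
    using j'm by (subst prod.remove[of _ j']) auto
  also have "(\<Prod>i\<in>{..<N}-{j}-{j'}. sum (?f i) A) = 1"
    using p1 by (intro prod.neutral) auto
  finally show ?thesis using jj by simp
qed

lemma exists_le_avg:
  fixes p f :: "'a \<Rightarrow> real"
  assumes A: "finite A" and p0: "\<forall>a\<in>A. p a \<ge> 0" and p1: "sum p A = 1"
  shows "\<exists>a\<in>A. f a \<le> (\<Sum>a\<in>A. p a * f a)"
proof (rule ccontr)
  assume "\<not> ?thesis"
  then have lt: "\<forall>a\<in>A. (\<Sum>a\<in>A. p a * f a) < f a" by auto
  show False
  proof -
    have "\<exists>a\<in>A. p a > 0"
    proof (rule ccontr)
      assume "\<not> ?thesis" then have "\<forall>a\<in>A. p a = 0" using p0 by force
      then show False using p1 by simp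
    qed
    then obtain a1 where a1: "a1 \<in> A" "p a1 > 0" by auto
    have "(\<Sum>a\<in>A. p a * (\<Sum>a\<in>A. p a * f a)) < (\<Sum>a\<in>A. p a * f a)"
      using lt p0 a1 A by (intro sum_strict_mono_ex1) (auto intro: mult_left_mono mult_strict_left_mono less_imp_le)
    then show False using p1 by (simp add: sum_distrib_right[symmetric])
  qed
qed

lemma deriv_lt_one:
  fixes p c :: "'a \<Rightarrow> real"
  assumes A: "finite A" and p1: "sum p A = 1" and neg: "(\<Sum>a\<in>A. p a * c a) < 0"
  shows "\<exists>d>0. \<forall>t. 0 < t \<and> t < d \<longrightarrow> (\<Sum>a\<in>A. p a * exp (t * c a)) < 1"
proof -
  let ?h = "\<lambda>t. \<Sum>a\<in>A. p a * exp (t * c a)"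
  have d: "DERIV ?h 0 :> (\<Sum>a\<in>A. c a * p a)"
    by (auto intro!: derivative_eq_intros)
  have eq: "(\<Sum>a\<in>A. c a * p a) = (\<Sum>a\<in>A. p a * c a)" by (simp add: mult.commute)
  have "DERIV ?h 0 :> (\<Sum>a\<in>A. p a * c a)" using DERIV_cong[OF d eq] .
  from DERIV_neg_dec_right[OF this neg] obtain d where "d > 0" "\<forall>t>0. t < d \<longrightarrow> ?h 0 > ?h (0 + t)" by auto
  then show ?thesis using p1 by (intro exI[of _ d]) auto
qed

lemma ln_one_plus_le_powr:
  fixes x r :: real
  assumes x: "x \<ge> 0" and r: "0 < r" "r \<le> 1"
  shows "ln (1 + x) \<le> x powr r / r"
proof (cases "x \<le> 1")
  case True
  have "ln (1 + x) \<le> x" using x by (intro ln_add_one_self_le_self) 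
  also have "x \<le> x powr r"
  proof (cases "x = 0")
    case False
    then have "x powr 1 \<le> x powr r" using True x r by (intro powr_mono') auto
    then show ?thesis using False x by simp
  qed simp
  also have "x powr r \<le> x powr r / r" using r by (simp add: le_divide_eq mult_left_le)
  finally show ?thesis .
next
  case False
  then have x1: "x > 1" by simp
  have a: "ln (1 + x) \<le> ln (2 * x)" using x1 by simp
  have b: "ln (2 * x) = ln 2 + ln x" using x1 by (simp add: ln_mult)
  have c: "ln x = ln (x powr r) / r" using x1 r by (simp add: ln_powr)
  have d: "ln (x powr r) \<le> x powr r - 1" using x1 by (intro ln_le_minus_one) simp
  have e: "ln (x powr r) / r \<le> (x powr r - 1) / r" using d r by (intro divide_right_mono) auto
  have f: "1 \<le> 1 / r" using r by simp
  have g: "ln 2 \<le> 1 / r" using ln_2_less_1 f by linarith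
  have h: "(x powr r - 1) / r = x powr r / r - 1 / r" by (simp add: diff_divide_distrib)
  show ?thesis using a b c e g h by linarith
qed




locale setting =
  fixes PS :: "'s::finite \<Rightarrow> real"
    and W :: "'s \<Rightarrow> 'x::finite \<Rightarrow> 'y::finite \<Rightarrow> 'z::finite \<Rightarrow> real"
    and x0 :: 'x and b :: "'x \<Rightarrow> real" and RK B :: real
    and V :: "nat set" and PV :: "nat \<Rightarrow> real" and xf :: "nat \<Rightarrow> 's \<Rightarrow> 'x"
  assumes PS: "is_pmf PS UNIV"
    and ch: "is_channel W"
    and Qpos: "\<forall>z. Q0 PS W x0 z > 0"
    and bnn: "\<forall>x. b x \<ge> 0"
    and RK: "RK \<ge> 0" and B: "B \<ge> 0"
    and finV: "finite V"
    and PV: "is_pmf PV V"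
    and PZ: "\<forall>z. (\<Sum>v\<in>V. PVZ PS W PV xf v z) = Q0 PS W x0 z"
    and cost: "(\<Sum>v\<in>V. \<Sum>s\<in>UNIV. PV v * PS s * b (xf v s)) \<le> B"
begin

definition "Wv v y = (\<Sum>s\<in>UNIV. PS s * WY W s (xf v s) y)"
definition "Zv v z = (\<Sum>s\<in>UNIV. PS s * WZ W s (xf v s) z)"
definition "PY y = (\<Sum>v\<in>V. PV v * Wv v y)"
definition "Q = Q0 PS W x0"
definition "beta v = (\<Sum>s\<in>UNIV. PS s * b (xf v s))"
definition "IY = mutual_info V UNIV (PVY PS W PV xf)"
definition "IZ = mutual_info V UNIV (PVZ PS W PV xf)"

lemma PS0: "PS s \<ge> 0" and PS1: "(\<Sum>s\<in>UNIV. PS s) = 1"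
  using PS by (auto simp: is_pmf_def)

lemma PV0: "v \<in> V \<Longrightarrow> PV v \<ge> 0" and PV1: "(\<Sum>v\<in>V. PV v) = 1"
  using PV by (auto simp: is_pmf_def)

lemma Vne: "V \<noteq> {}" using PV1 by auto

lemma W0: "W s x y z \<ge> 0" using ch by (auto simp: is_channel_def)

lemma WY0: "WY W s x y \<ge> 0" unfolding WY_def by (intro sum_nonneg) (simp add: W0)
lemma WZ0: "WZ W s x z \<ge> 0" unfolding WZ_def by (intro sum_nonneg) (simp add: W0)

lemma WY1: "(\<Sum>y\<in>UNIV. WY W s x y) = 1"
  using ch unfolding is_channel_def WY_def by auto

lemma WZ1: "(\<Sum>z\<in>UNIV. WZ W s x z) = 1"
  using ch unfolding is_channel_def WZ_def by (auto simp: sum.swap[of _ "UNIV::'z set"])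

lemma Wv0: "Wv v y \<ge> 0" unfolding Wv_def by (intro sum_nonneg mult_nonneg_nonneg PS0 WY0)
lemma Zv0: "Zv v z \<ge> 0" unfolding Zv_def by (intro sum_nonneg mult_nonneg_nonneg PS0 WZ0)

lemma Wv1: "(\<Sum>y\<in>UNIV. Wv v y) = 1"
proof -
  have "(\<Sum>y\<in>UNIV. Wv v y) = (\<Sum>s\<in>UNIV. PS s * (\<Sum>y\<in>UNIV. WY W s (xf v s) y))"
    unfolding Wv_def by (simp add: sum.swap[of _ "UNIV::'y set"] sum_distrib_left)
  also have "\<dots> = 1" by (simp add: WY1 PS1)
  finally show ?thesis .
qed

lemma Zv1: "(\<Sum>z\<in>UNIV. Zv v z) = 1"
proof -
  have "(\<Sum>z\<in>UNIV. Zv v z) = (\<Sum>s\<in>UNIV. PS s * (\<Sum>z\<in>UNIV. WZ W s (xf v s) z))"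
    unfolding Zv_def by (simp add: sum.swap[of _ "UNIV::'z set"] sum_distrib_left)
  also have "\<dots> = 1" by (simp add: WZ1 PS1)
  finally show ?thesis .
qed

lemma PY0: "PY y \<ge> 0" unfolding PY_def by (intro sum_nonneg mult_nonneg_nonneg PV0 Wv0) auto

lemma PVY_eq: "PVY PS W PV xf v y = PV v * Wv v y"
  unfolding PVY_def Wv_def by (simp add: sum_distrib_left ac_simps)

lemma PVZ_eq: "PVZ PS W PV xf v z = PV v * Zv v z"
  unfolding PVZ_def Zv_def by (simp add: sum_distrib_left ac_simps)

lemma Q_eq: "Q z = (\<Sum>v\<in>V. PV v * Zv v z)"
  using PZ unfolding Q_def by (simp add: PVZ_eq)

lemma Qpos': "Q z > 0" using Qpos by (simp add: Q_def)

lemma PY_pos: "v \<in> V \<Longrightarrow> PV v * Wv v y \<noteq> 0 \<Longrightarrow> PY y > 0"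
proof -
  assume v: "v \<in> V" and ne: "PV v * Wv v y \<noteq> 0"
  have "PV v * Wv v y > 0" using ne PV0[OF v] Wv0[of v y] by (simp add: less_le)
  moreover have "PV v * Wv v y \<le> PY y" unfolding PY_def
    using finV v by (intro member_le_sum) (auto intro!: mult_nonneg_nonneg PV0 Wv0)
  ultimately show ?thesis by simp
qed

lemma IY_eq: "IY = (\<Sum>v\<in>V. \<Sum>y\<in>UNIV. if PV v * Wv v y = 0 then 0
                     else PV v * Wv v y * ((ln (Wv v y) - ln (PY y)) / ln 2))"
  unfolding IY_def mutual_info_def
proof (intro sum.cong refl)
  fix v y assume v: "v \<in> V"
  have m1: "(\<Sum>b'\<in>UNIV. PVY PS W PV xf v b') = PV v" by (simp add: PVY_eq sum_distrib_left[symmetric] Wv1)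
  have m2: "(\<Sum>a'\<in>V. PVY PS W PV xf a' y) = PY y" by (simp add: PVY_eq PY_def)
  show "(if PVY PS W PV xf v y = 0 then 0
         else PVY PS W PV xf v y * log 2 (PVY PS W PV xf v y / ((\<Sum>b'\<in>UNIV. PVY PS W PV xf v b') * (\<Sum>a'\<in>V. PVY PS W PV xf a' y)))) =
        (if PV v * Wv v y = 0 then 0 else PV v * Wv v y * ((ln (Wv v y) - ln (PY y)) / ln 2))"
  proof (cases "PV v * Wv v y = 0")
    case False
    then have pv: "PV v > 0" and wv: "Wv v y > 0" using PV0[OF v] Wv0[of v y] by (auto simp: less_le)
    have py: "PY y > 0" using PY_pos[OF v False] .
    have "PV v * Wv v y / (PV v * PY y) = Wv v y / PY y" using pv by simp
    then show ?thesis unfolding m1 m2 unfolding PVY_eq using False pv wv py by (simp add: log_def ln_div)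
  qed (simp add: PVY_eq)
qed

lemma IZ_eq: "IZ = (\<Sum>v\<in>V. \<Sum>z\<in>UNIV. if PV v * Zv v z = 0 then 0
                     else PV v * Zv v z * ((ln (Zv v z) - ln (Q z)) / ln 2))"
  unfolding IZ_def mutual_info_def
proof (intro sum.cong refl)
  fix v z assume v: "v \<in> V"
  have m1: "(\<Sum>b'\<in>UNIV. PVZ PS W PV xf v b') = PV v" by (simp add: PVZ_eq sum_distrib_left[symmetric] Zv1)
  have m2: "(\<Sum>a'\<in>V. PVZ PS W PV xf a' z) = Q z" by (simp add: PVZ_eq Q_eq)
  show "(if PVZ PS W PV xf v z = 0 then 0
         else PVZ PS W PV xf v z * log 2 (PVZ PS W PV xf v z / ((\<Sum>b'\<in>UNIV. PVZ PS W PV xf v b') * (\<Sum>a'\<in>V. PVZ PS W PV xf a' z)))) =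
        (if PV v * Zv v z = 0 then 0 else PV v * Zv v z * ((ln (Zv v z) - ln (Q z)) / ln 2))"
  proof (cases "PV v * Zv v z = 0")
    case False
    then have pv: "PV v > 0" and wv: "Zv v z > 0" using PV0[OF v] Zv0[of v z] by (auto simp: less_le)
    have py: "Q z > 0" using Qpos' .
    have "PV v * Zv v z / (PV v * Q z) = Zv v z / Q z" using pv by simp
    then show ?thesis unfolding m1 m2 unfolding PVZ_eq using False pv wv py by (simp add: log_def ln_div)
  qed (simp add: PVZ_eq)
qed

end



context setting begin

definition "Wn n v y = (\<Prod>i<n. Wv (v!i) (y!i))"
definition "Zn n v z = (\<Prod>i<n. Zv (v!i) (z!i))"
definition "PVn n v = prodn n PV v"
definition "PYn n y = prodn n PY y"
definition "Qn n z = prodn n Q z"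

lemma finite_seqs: "finite (seqs n :: ('a::finite) list set)"
  unfolding seqs_lset by (rule finite_lset) simp

lemma finite_lsetV: "finite (lset V n)" by (rule finite_lset[OF finV])

lemma Wn0: "Wn n v y \<ge> 0" unfolding Wn_def by (intro prod_nonneg) (simp add: Wv0)
lemma Zn0: "Zn n v y \<ge> 0" unfolding Zn_def by (intro prod_nonneg) (simp add: Zv0)
lemma PVn0: "v \<in> lset V n \<Longrightarrow> PVn n v \<ge> 0"
  unfolding PVn_def prodn_def lset_def by (intro prod_nonneg) (auto intro!: PV0 simp: subset_iff)
lemma PYn0: "PYn n y \<ge> 0" unfolding PYn_def prodn_def by (intro prod_nonneg) (simp add: PY0)
lemma Qn_pos: "Qn n z > 0" unfolding Qn_def prodn_def by (intro prod_pos) (simp add: Qpos')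

lemma Wn_sum1: "(\<Sum>y\<in>seqs n. Wn n v y) = 1"
  unfolding Wn_def seqs_lset
  by (subst sum_prod_lset) (simp_all add: Wv1)

lemma Zn_sum1: "(\<Sum>z\<in>seqs n. Zn n v z) = 1"
  unfolding Zn_def seqs_lset
  by (subst sum_prod_lset) (simp_all add: Zv1)

lemma PVn_sum1: "(\<Sum>v\<in>lset V n. PVn n v) = 1"
  unfolding PVn_def prodn_def using exp_all[OF finV PV1] by simp

lemma PVn_Wn: "(\<Sum>v\<in>lset V n. PVn n v * Wn n v y) = PYn n y"
proof -
  have "(\<Sum>v\<in>lset V n. PVn n v * Wn n v y) = (\<Sum>v\<in>lset V n. \<Prod>i<n. PV (v!i) * Wv (v!i) (y!i))"
    unfolding PVn_def prodn_def Wn_def by (simp add: prod.distrib)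
  also have "\<dots> = (\<Prod>i<n. \<Sum>a\<in>V. PV a * Wv a (y!i))"
    by (rule sum_prod_lset[OF finV])
  finally show ?thesis by (simp add: PYn_def prodn_def PY_def)
qed

lemma PVn_Zn: "(\<Sum>v\<in>lset V n. PVn n v * Zn n v z) = Qn n z"
proof -
  have "(\<Sum>v\<in>lset V n. PVn n v * Zn n v z) = (\<Sum>v\<in>lset V n. \<Prod>i<n. PV (v!i) * Zv (v!i) (z!i))"
    unfolding PVn_def prodn_def Zn_def by (simp add: prod.distrib)
  also have "\<dots> = (\<Prod>i<n. \<Sum>a\<in>V. PV a * Zv a (z!i))"
    by (rule sum_prod_lset[OF finV])
  finally show ?thesis by (simp add: Qn_def prodn_def Q_eq)
qed

lemma state_avg:
  "(\<Sum>s\<in>seqs n. prodn n PS s * (\<Prod>i<n. g i (s!i))) = (\<Prod>i<n. \<Sum>s\<in>UNIV. PS s * g i s)"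
proof -
  have "(\<Sum>s\<in>seqs n. prodn n PS s * (\<Prod>i<n. g i (s!i))) = (\<Sum>s\<in>lset UNIV n. \<Prod>i<n. PS (s!i) * g i (s!i))"
    unfolding seqs_lset prodn_def by (simp add: prod.distrib)
  also have "\<dots> = (\<Prod>i<n. \<Sum>s\<in>UNIV. PS s * g i s)" by (rule sum_prod_lset) simp
  finally show ?thesis .
qed

lemma state_avg1:
  assumes "i < n"
  shows "(\<Sum>s\<in>seqs n. prodn n PS s * g (s!i)) = (\<Sum>s\<in>UNIV. PS s * g s)"
  unfolding seqs_lset prodn_def using exp_one[OF _ assms PS1, of g] by simp

end

lemma sum_pair_reindex:
  fixes f :: "nat \<Rightarrow> 'a::comm_monoid_add"
  shows "(\<Sum>m<M. \<Sum>k<K. f (k * M + m)) = (\<Sum>j<M * K. f j)"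
proof -
  have "(\<Sum>m<M. \<Sum>k<K. f (k * M + m)) = (\<Sum>(m,k)\<in>{..<M} \<times> {..<K}. f (k * M + m))"
    by (simp add: sum.cartesian_product)
  also have "\<dots> = (\<Sum>j<M * K. f j)"
  proof (rule sum.reindex_bij_witness[where i="\<lambda>j. (j mod M, j div M)" and j="\<lambda>(m,k). k * M + m"])
    fix a assume a: "a \<in> {..<M} \<times> {..<K}"
    then obtain m k where mk: "a = (m,k)" "m < M" "k < K" by auto
    show "(\<lambda>j. (j mod M, j div M)) (case a of (m, k) \<Rightarrow> k * M + m) = a"
      using mk by simp
    have "k * M + m < k * M + M" using mk by simp
    also have "\<dots> = Suc k * M" by simp
    also have "\<dots> \<le> K * M" using mk by (intro mult_right_mono) auto
    finally show "(case a of (m, k) \<Rightarrow> k * M + m) \<in> {..<M * K}" using mk by (simp add: mult.commute)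
  next
    fix j assume j: "j \<in> {..<M * K}"
    then have M: "M > 0" by (cases M) auto
    show "(case (j mod M, j div M) of (m, k) \<Rightarrow> k * M + m) = j" by simp
    have "j div M < K" using j M by (simp add: div_less_iff_less_mult mult.commute)
    then show "(j mod M, j div M) \<in> {..<M} \<times> {..<K}" using M by simp
  next
    fix a assume a: "a \<in> {..<M} \<times> {..<K}"
    then obtain m k where mk: "a = (m,k)" "m < M" "k < K" by auto
    show "f (case a of (m, k) \<Rightarrow> k * M + m) = (case a of (m, k) \<Rightarrow> f (k * M + m))" using mk by simp
  qed
  finally show ?thesis .
qed

locale ach = setting +
  fixes R \<gamma> :: real
  assumes R0: "0 \<le> R" and RZ: "IZ < R + RK" and Rg: "R = 0 \<or> (R < \<gamma> \<and> \<gamma> < IY)"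
begin

definition "Mn n = num_msgs n R"
definition "Kn n = num_keys n RK"
definition "NN n = Mn n * Kn n"
definition "T n v y \<longleftrightarrow> Wn n v y > 2 powr (real n * \<gamma>) * PYn n y"

definition
  "code n cb = \<lparr>rand_size = 1, rand_pmf = (\<lambda>_. 1),
      enc = (\<lambda>u i m k s. xf (cb ! (k * Mn n + m) ! i) (last s)),
      dec = (\<lambda>y k. if Mn n = 1 then 0 else (LEAST m. m < Mn n \<and> T n (cb ! (k * Mn n + m)) y))\<rparr>"

lemma code_simps [simp]:
  "rand_size (code n cb) = 1" "rand_pmf (code n cb) u = 1"
  "dec (code n cb) y k = (if Mn n = 1 then 0 else (LEAST m. m < Mn n \<and> T n (cb ! (k * Mn n + m)) y))"
  by (simp_all add: code_def)

lemma cinput_nth: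
  assumes "s \<in> seqs n" "i < n"
  shows "cinput (code n cb) n u m k s ! i = xf (cb ! (k * Mn n + m) ! i) (s!i)"
proof -
  have ls: "length s = n" using assms(1) by (simp add: seqs_def)
  have "last (take (Suc i) s) = s ! i"
    using assms(2) ls by (simp add: take_Suc_conv_app_nth)
  then show ?thesis using assms(2) by (simp add: cinput_def code_def)
qed

lemma Mn_pos: "Mn n \<ge> 1"
proof -
  have "2 powr (real n * R) > 0" by simp
  then have "\<lceil>2 powr (real n * R)\<rceil> \<ge> 1" by simp
  then show ?thesis unfolding Mn_def num_msgs_def by linarith
qed

lemma Kn_pos: "Kn n \<ge> 1"
proof -
  have "2 powr (real n * RK) \<ge> 1" using RK by (simp add: ge_one_powr_ge_zero)
  then have "\<lfloor>2 powr (real n * RK)\<rfloor> \<ge> 1" by simp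
  then show ?thesis unfolding Kn_def num_keys_def by linarith
qed

lemma NN_pos: "NN n \<ge> 1" using Mn_pos Kn_pos by (simp add: NN_def)

lemma err_rep:
  "err_prob PS W n R RK (code n cb) =
     (\<Sum>m<Mn n. \<Sum>k<Kn n. \<Sum>y\<in>seqs n. Wn n (cb ! (k * Mn n + m)) y *
        (if dec (code n cb) y k \<noteq> m then 1 else 0)) / real (NN n)"
proof -
  have inner: "(\<Sum>s\<in>seqs n. cweight PS (code n cb) n (Mn n) (Kn n) 0 m k s *
       (\<Sum>y\<in>seqs n. (\<Prod>i<n. WY W (s ! i) (cinput (code n cb) n 0 m k s ! i) (y ! i)) *
           (if dec (code n cb) y k \<noteq> m then 1 else 0)))
     = (\<Sum>y\<in>seqs n. Wn n (cb ! (k * Mn n + m)) y * (if dec (code n cb) y k \<noteq> m then 1 else 0)) / real (NN n)"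
    for m k
  proof -
    let ?w = "cb ! (k * Mn n + m)"
    let ?I = "\<lambda>y. (if dec (code n cb) y k \<noteq> m then 1 else 0 :: real)"
    have "(\<Sum>s\<in>seqs n. cweight PS (code n cb) n (Mn n) (Kn n) 0 m k s *
       (\<Sum>y\<in>seqs n. (\<Prod>i<n. WY W (s ! i) (cinput (code n cb) n 0 m k s ! i) (y ! i)) * ?I y))
       = (\<Sum>s\<in>seqs n. prodn n PS s / real (NN n) *
       (\<Sum>y\<in>seqs n. (\<Prod>i<n. WY W (s ! i) (xf (?w ! i) (s!i)) (y ! i)) * ?I y))"
      by (intro sum.cong refl arg_cong2[where f="(*)"] prod.cong)
         (auto simp: cweight_def NN_def cinput_nth simp del: code_simps(3))
    also have "\<dots> = (\<Sum>y\<in>seqs n. ?I y * (\<Sum>s\<in>seqs n. prodn n PS s * (\<Prod>i<n. WY W (s ! i) (xf (?w ! i) (s!i)) (y ! i)))) / real (NN n)"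
      apply (simp add: sum_distrib_left sum_divide_distrib)
      apply (subst sum.swap)
      apply (simp add: ac_simps)
      done
    also have "\<dots> = (\<Sum>y\<in>seqs n. ?I y * Wn n ?w y) / real (NN n)"
    proof -
      have "(\<Sum>s\<in>seqs n. prodn n PS s * (\<Prod>i<n. WY W (s ! i) (xf (?w ! i) (s!i)) (y ! i))) = Wn n ?w y" for y
        using state_avg[of n "\<lambda>i x. WY W x (xf (?w!i) x) (y!i)"] by (simp add: Wn_def Wv_def)
      then show ?thesis by simp
    qed
    finally show ?thesis by (simp add: ac_simps)
  qed
  show ?thesis
    unfolding err_prob_def Let_def Mn_def[symmetric] Kn_def[symmetric]
    using inner by (simp add: sum_divide_distrib del: code_simps(3))
qed

lemma warden_rep:
  "warden_dist PS W n R RK (code n cb) z = (\<Sum>j<NN n. Zn n (cb ! j) z) / real (NN n)"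
proof -
  have inner: "(\<Sum>s\<in>seqs n. cweight PS (code n cb) n (Mn n) (Kn n) 0 m k s *
       (\<Prod>i<n. WZ W (s ! i) (cinput (code n cb) n 0 m k s ! i) (z ! i)))
     = Zn n (cb ! (k * Mn n + m)) z / real (NN n)" for m k
  proof -
    let ?w = "cb ! (k * Mn n + m)"
    have "(\<Sum>s\<in>seqs n. cweight PS (code n cb) n (Mn n) (Kn n) 0 m k s *
       (\<Prod>i<n. WZ W (s ! i) (cinput (code n cb) n 0 m k s ! i) (z ! i)))
       = (\<Sum>s\<in>seqs n. prodn n PS s * (\<Prod>i<n. WZ W (s ! i) (xf (?w ! i) (s!i)) (z ! i))) / real (NN n)"
      unfolding sum_divide_distrib
      by (intro sum.cong refl) (auto simp: cweight_def NN_def cinput_nth intro!: prod.cong simp del: code_simps(3))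
    also have "\<dots> = Zn n ?w z / real (NN n)"
      using state_avg[of n "\<lambda>i x. WZ W x (xf (?w!i) x) (z!i)"] by (simp add: Zn_def Zv_def)
    finally show ?thesis .
  qed
  have "warden_dist PS W n R RK (code n cb) z = (\<Sum>m<Mn n. \<Sum>k<Kn n. Zn n (cb ! (k * Mn n + m)) z) / real (NN n)"
    unfolding warden_dist_def Let_def Mn_def[symmetric] Kn_def[symmetric]
    using inner by (simp add: sum_divide_distrib del: code_simps(3))
  then show ?thesis by (simp add: sum_pair_reindex[of "\<lambda>j. Zn n (cb ! j) z"] NN_def)
qed

definition "cvec n v = (\<Sum>i<n. beta (v!i)) / real n"

lemma cost_rep:
  "exp_cost PS b n R RK (code n cb) = (\<Sum>j<NN n. cvec n (cb ! j)) / real (NN n)"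
proof -
  have inner: "(\<Sum>s\<in>seqs n. cweight PS (code n cb) n (Mn n) (Kn n) 0 m k s *
       ((\<Sum>i<n. b (cinput (code n cb) n 0 m k s ! i)) / real n))
     = cvec n (cb ! (k * Mn n + m)) / real (NN n)" for m k
  proof -
    let ?w = "cb ! (k * Mn n + m)"
    have "(\<Sum>s\<in>seqs n. cweight PS (code n cb) n (Mn n) (Kn n) 0 m k s *
       ((\<Sum>i<n. b (cinput (code n cb) n 0 m k s ! i)) / real n))
       = (\<Sum>i<n. \<Sum>s\<in>seqs n. prodn n PS s * b (xf (?w ! i) (s!i))) / (real n * real (NN n))"
    proof -
      have pt: "cweight PS (code n cb) n (Mn n) (Kn n) 0 m k s *
         ((\<Sum>i<n. b (cinput (code n cb) n 0 m k s ! i)) / real n)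
        = (\<Sum>i<n. prodn n PS s * b (xf (?w ! i) (s!i)) / (real n * real (NN n)))"
        if s: "s \<in> seqs n" for s
      proof -
        have "(\<Sum>i<n. b (cinput (code n cb) n 0 m k s ! i)) = (\<Sum>i<n. b (xf (?w ! i) (s!i)))"
          using s by (intro sum.cong refl) (simp add: cinput_nth)
        then show ?thesis
          by (simp add: cweight_def NN_def sum_distrib_left sum_divide_distrib mult.commute mult.left_commute)
      qed
      have "(\<Sum>s\<in>seqs n. cweight PS (code n cb) n (Mn n) (Kn n) 0 m k s *
         ((\<Sum>i<n. b (cinput (code n cb) n 0 m k s ! i)) / real n))
        = (\<Sum>s\<in>seqs n. \<Sum>i<n. prodn n PS s * b (xf (?w ! i) (s!i)) / (real n * real (NN n)))"
        by (rule sum.cong[OF refl pt])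
      also have "\<dots> = (\<Sum>i<n. \<Sum>s\<in>seqs n. prodn n PS s * b (xf (?w ! i) (s!i)) / (real n * real (NN n)))"
        by (rule sum.swap)
      finally show ?thesis by (simp add: sum_divide_distrib)
    qed
    also have "\<dots> = (\<Sum>i<n. beta (?w ! i)) / (real n * real (NN n))"
      using state_avg1[of _ n "\<lambda>x. b (xf (?w ! _) x)"] by (simp add: beta_def)
    finally show ?thesis by (simp add: cvec_def)
  qed
  have "exp_cost PS b n R RK (code n cb) = (\<Sum>m<Mn n. \<Sum>k<Kn n. cvec n (cb ! (k * Mn n + m))) / real (NN n)"
    unfolding exp_cost_def Let_def Mn_def[symmetric] Kn_def[symmetric]
    using inner by (simp add: sum_divide_distrib del: code_simps(3))
  then show ?thesis by (simp add: sum_pair_reindex[of "\<lambda>j. cvec n (cb ! j)"] NN_def)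
qed

end



lemma sum_prod_pairs:
  fixes g :: "'a \<Rightarrow> 'b \<Rightarrow> real"
  assumes A: "finite A" and Bf: "finite Bs"
  shows "(\<Sum>v\<in>lset A n. \<Sum>y\<in>lset Bs n. \<Prod>i<n. g (v!i) (y!i)) = (\<Sum>a\<in>A. \<Sum>c\<in>Bs. g a c) ^ n"
proof -
  have "(\<Sum>v\<in>lset A n. \<Sum>y\<in>lset Bs n. \<Prod>i<n. g (v!i) (y!i)) = (\<Sum>v\<in>lset A n. \<Prod>i<n. \<Sum>c\<in>Bs. g (v!i) c)"
    by (intro sum.cong refl) (rule sum_prod_lset[OF Bf])
  also have "\<dots> = (\<Prod>i<n. \<Sum>a\<in>A. \<Sum>c\<in>Bs. g a c)"
    by (rule sum_prod_lset[OF A])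
  finally show ?thesis by simp
qed

context ach begin

definition "CB n = lset (lset V n) (NN n)"
definition "Pcb n cb = (\<Prod>j<NN n. PVn n (cb!j))"
definition "EE n f = (\<Sum>cb\<in>CB n. Pcb n cb * f cb)"

lemma finite_CB: "finite (CB n)" unfolding CB_def by (intro finite_lset finite_lsetV)

lemma CB_nth: "cb \<in> CB n \<Longrightarrow> j < NN n \<Longrightarrow> cb ! j \<in> lset V n"
proof -
  assume "cb \<in> CB n" "j < NN n"
  then have "cb ! j \<in> set cb" "set cb \<subseteq> lset V n" unfolding CB_def lset_def by auto
  then show ?thesis by blast
qed

lemma Pcb0: "cb \<in> CB n \<Longrightarrow> Pcb n cb \<ge> 0"
  unfolding Pcb_def by (intro prod_nonneg) (auto intro: PVn0 CB_nth)

lemma Pcb1: "(\<Sum>cb\<in>CB n. Pcb n cb) = 1"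
  unfolding CB_def Pcb_def by (rule exp_all[OF finite_lsetV PVn_sum1])

lemma EE_one: "j < NN n \<Longrightarrow> EE n (\<lambda>cb. \<phi> (cb!j)) = (\<Sum>v\<in>lset V n. PVn n v * \<phi> v)"
  unfolding EE_def CB_def Pcb_def by (rule exp_one[OF finite_lsetV _ PVn_sum1])

lemma EE_two: "j < NN n \<Longrightarrow> j' < NN n \<Longrightarrow> j \<noteq> j' \<Longrightarrow>
   EE n (\<lambda>cb. \<phi> (cb!j) * \<psi> (cb!j')) = (\<Sum>v\<in>lset V n. PVn n v * \<phi> v) * (\<Sum>v\<in>lset V n. PVn n v * \<psi> v)"
  unfolding EE_def CB_def Pcb_def using exp_two[OF finite_lsetV _ _ _ PVn_sum1] by (simp add: mult.assoc)

lemma EE_sum: "finite I \<Longrightarrow> EE n (\<lambda>cb. \<Sum>i\<in>I. f i cb) = (\<Sum>i\<in>I. EE n (f i))"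
  unfolding EE_def by (simp add: sum_distrib_left sum.swap[of _ I])

lemma EE_add: "EE n (\<lambda>cb. f cb + g cb) = EE n f + EE n g"
  unfolding EE_def by (simp add: distrib_left sum.distrib)

lemma EE_diff: "EE n (\<lambda>cb. f cb - g cb) = EE n f - EE n g"
  unfolding EE_def by (simp add: right_diff_distrib sum_subtractf)

lemma EE_cmult: "EE n (\<lambda>cb. c * f cb) = c * EE n f"
  unfolding EE_def by (simp add: sum_distrib_left ac_simps)

lemma EE_divide: "EE n (\<lambda>cb. f cb / c) = EE n f / c"
  unfolding EE_def by (simp add: sum_divide_distrib)

lemma EE_const: "EE n (\<lambda>cb. c) = c"
  unfolding EE_def by (simp add: sum_distrib_right[symmetric] Pcb1)

lemma EE_mono: "(\<And>cb. cb \<in> CB n \<Longrightarrow> f cb \<le> g cb) \<Longrightarrow> EE n f \<le> EE n g"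
  unfolding EE_def by (intro sum_mono mult_left_mono) (auto intro: Pcb0)

lemma EE_nonneg: "(\<And>cb. cb \<in> CB n \<Longrightarrow> 0 \<le> f cb) \<Longrightarrow> 0 \<le> EE n f"
  using EE_mono[of n "\<lambda>_. 0" f] by (simp add: EE_const)

lemma idx_lt: "m < Mn n \<Longrightarrow> k < Kn n \<Longrightarrow> k * Mn n + m < NN n"
proof -
  assume m: "m < Mn n" and k: "k < Kn n"
  have "k * Mn n + m < k * Mn n + Mn n" using m by simp
  also have "\<dots> = Suc k * Mn n" by simp
  also have "\<dots> \<le> Kn n * Mn n" using k by (intro mult_right_mono) auto
  finally show ?thesis by (simp add: NN_def mult.commute)
qed

end



context ach begin

definition "Aerr n = (\<Sum>v\<in>lset V n. PVn n v * (\<Sum>y\<in>seqs n. Wn n v y * (if T n v y then 0 else 1)))"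

lemma Aerr0: "Aerr n \<ge> 0"
  unfolding Aerr_def by (intro sum_nonneg mult_nonneg_nonneg PVn0 Wn0) auto

lemma err_nonneg: "err_prob PS W n R RK (code n cb) \<ge> 0"
  unfolding err_rep by (intro divide_nonneg_nonneg sum_nonneg mult_nonneg_nonneg Wn0) auto

lemma err_Mn1: "Mn n = 1 \<Longrightarrow> err_prob PS W n R RK (code n cb) = 0"
  unfolding err_rep by simp

lemma ind_bound:
  assumes m: "m < Mn n" and M1: "Mn n \<noteq> 1"
  shows "(if dec (code n cb) y k \<noteq> m then 1 else 0 :: real)
    \<le> (if T n (cb ! (k * Mn n + m)) y then 0 else 1) +
       (\<Sum>m'\<in>{..<Mn n}-{m}. if T n (cb ! (k * Mn n + m')) y then 1 else 0)"
proof -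
  let ?P = "\<lambda>m'. m' < Mn n \<and> T n (cb ! (k * Mn n + m')) y"
  have S0: "0 \<le> (\<Sum>m'\<in>{..<Mn n}-{m}. if T n (cb ! (k * Mn n + m')) y then 1 else 0 :: real)"
    by (intro sum_nonneg) auto
  show ?thesis
  proof (cases "T n (cb ! (k * Mn n + m)) y")
    case False
    then show ?thesis using S0 by auto
  next
    case True
    then have Pm: "?P m" using m by simp
    let ?l = "LEAST m'. ?P m'"
    have Pl: "?P ?l" using LeastI[of ?P, OF Pm] .
    have lm: "?l \<le> m" using Least_le[of ?P, OF Pm] .
    show ?thesis
    proof (cases "?l = m")
      case True
      then show ?thesis using M1 S0 by simp
    next
      case False
      have "(1::real) = (if T n (cb ! (k * Mn n + ?l)) y then 1 else 0)" using Pl by simp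
      also have "\<dots> \<le> (\<Sum>m'\<in>{..<Mn n}-{m}. if T n (cb ! (k * Mn n + m')) y then 1 else 0)"
        using Pl False by (intro member_le_sum) auto
      finally show ?thesis using M1 by simp
    qed
  qed
qed

lemma B_bound: "(\<Sum>y\<in>seqs n. PYn n y * (\<Sum>v\<in>lset V n. PVn n v * (if T n v y then 1 else 0)))
    \<le> 2 powr (-(real n * \<gamma>))"
proof -
  have "(\<Sum>y\<in>seqs n. PYn n y * (\<Sum>v\<in>lset V n. PVn n v * (if T n v y then 1 else 0)))
      = (\<Sum>v\<in>lset V n. PVn n v * (\<Sum>y\<in>seqs n. PYn n y * (if T n v y then 1 else 0)))"
    by (simp add: sum_distrib_left sum.swap[of _ "seqs n"] ac_simps)
  also have "\<dots> \<le> (\<Sum>v\<in>lset V n. PVn n v * (\<Sum>y\<in>seqs n. 2 powr (-(real n * \<gamma>)) * Wn n v y))"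
  proof (intro sum_mono mult_left_mono PVn0)
    fix v y
    show "PYn n y * (if T n v y then 1 else 0) \<le> 2 powr (-(real n * \<gamma>)) * Wn n v y"
    proof (cases "T n v y")
      case True
      then have "2 powr (real n * \<gamma>) * PYn n y < Wn n v y" by (simp add: T_def)
      then have "2 powr (-(real n * \<gamma>)) * (2 powr (real n * \<gamma>) * PYn n y) \<le> 2 powr (-(real n * \<gamma>)) * Wn n v y"
        by (intro mult_left_mono) auto
      then show ?thesis using True by (simp add: powr_minus field_simps)
    qed (auto intro!: mult_nonneg_nonneg Wn0)
  qed
  also have "\<dots> = 2 powr (-(real n * \<gamma>))"
    by (simp add: sum_distrib_left[symmetric] Wn_sum1 sum_distrib_right[symmetric] PVn_sum1 mult.commute[of "PVn n _"])
  finally show ?thesis .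
qed

lemma EE_err: "EE n (\<lambda>cb. err_prob PS W n R RK (code n cb)) \<le> Aerr n + real (Mn n - 1) * 2 powr (-(real n * \<gamma>))"
proof (cases "Mn n = 1")
  case True
  then show ?thesis using Aerr0 by (simp add: err_Mn1 EE_const)
next
  case M1: False
  let ?w = "\<lambda>cb m k. cb ! (k * Mn n + m)"
  define H where "H m k y cb = Wn n (?w cb m k) y * (if T n (?w cb m k) y then 0 else 1)
      + (\<Sum>m'\<in>{..<Mn n}-{m}. Wn n (?w cb m k) y * (if T n (?w cb m' k) y then 1 else 0))" for m k y cb
  let ?C = "Aerr n + real (Mn n - 1) * 2 powr (-(real n * \<gamma>))"
  have pt: "err_prob PS W n R RK (code n cb) \<le> (\<Sum>m<Mn n. \<Sum>k<Kn n. \<Sum>y\<in>seqs n. H m k y cb) / real (NN n)" for cb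
    unfolding err_rep
  proof (intro divide_right_mono sum_mono)
    fix m k y assume m: "m \<in> {..<Mn n}"
    have "Wn n (?w cb m k) y * (if dec (code n cb) y k \<noteq> m then 1 else 0)
       \<le> Wn n (?w cb m k) y * ((if T n (cb ! (k * Mn n + m)) y then 0 else 1) +
       (\<Sum>m'\<in>{..<Mn n}-{m}. if T n (cb ! (k * Mn n + m')) y then 1 else 0))"
      using ind_bound[where m=m and n=n and y=y and k=k and cb=cb] m M1 by (intro mult_left_mono Wn0) auto
    then show "Wn n (?w cb m k) y * (if dec (code n cb) y k \<noteq> m then 1 else 0) \<le> H m k y cb"
      by (simp add: H_def distrib_left sum_distrib_left)
  qed simp
  have EH: "(\<Sum>y\<in>seqs n. EE n (H m k y)) \<le> ?C" if m: "m < Mn n" and k: "k < Kn n" for m k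
  proof -
    have j: "k * Mn n + m < NN n" by (rule idx_lt[OF m k])
    have EH1: "EE n (H m k y) = (\<Sum>v\<in>lset V n. PVn n v * (Wn n v y * (if T n v y then 0 else 1)))
       + real (Mn n - 1) * (PYn n y * (\<Sum>v\<in>lset V n. PVn n v * (if T n v y then 1 else 0)))" for y
    proof -
      have "EE n (H m k y) = EE n (\<lambda>cb. Wn n (?w cb m k) y * (if T n (?w cb m k) y then 0 else 1))
         + (\<Sum>m'\<in>{..<Mn n}-{m}. EE n (\<lambda>cb. Wn n (?w cb m k) y * (if T n (?w cb m' k) y then 1 else 0)))"
        unfolding H_def EE_add by (subst EE_sum) auto
      also have "EE n (\<lambda>cb. Wn n (?w cb m k) y * (if T n (?w cb m k) y then 0 else 1))
          = (\<Sum>v\<in>lset V n. PVn n v * (Wn n v y * (if T n v y then 0 else 1)))"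
        by (rule EE_one[OF j])
      also have "(\<Sum>m'\<in>{..<Mn n}-{m}. EE n (\<lambda>cb. Wn n (?w cb m k) y * (if T n (?w cb m' k) y then 1 else 0)))
          = (\<Sum>m'\<in>{..<Mn n}-{m}. PYn n y * (\<Sum>v\<in>lset V n. PVn n v * (if T n v y then 1 else 0)))"
      proof (intro sum.cong refl)
        fix m' assume m': "m' \<in> {..<Mn n}-{m}"
        have j': "k * Mn n + m' < NN n" using m' k by (intro idx_lt) auto
        have "k * Mn n + m \<noteq> k * Mn n + m'" using m' by auto
        then show "EE n (\<lambda>cb. Wn n (?w cb m k) y * (if T n (?w cb m' k) y then 1 else 0))
            = PYn n y * (\<Sum>v\<in>lset V n. PVn n v * (if T n v y then 1 else 0))"
          using EE_two[OF j j', of "\<lambda>v. Wn n v y" "\<lambda>v. if T n v y then 1 else 0"] by (simp add: PVn_Wn)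
      qed
      also have "\<dots> = real (Mn n - 1) * (PYn n y * (\<Sum>v\<in>lset V n. PVn n v * (if T n v y then 1 else 0)))"
        using m by simp
      finally show ?thesis .
    qed
    have "(\<Sum>y\<in>seqs n. EE n (H m k y)) = Aerr n + real (Mn n - 1) *
        (\<Sum>y\<in>seqs n. PYn n y * (\<Sum>v\<in>lset V n. PVn n v * (if T n v y then 1 else 0)))"
      unfolding EH1 sum.distrib Aerr_def
      by (simp add: sum_distrib_left sum.swap[of _ "seqs n"] ac_simps)
    also have "\<dots> \<le> ?C"
      using B_bound by (intro add_left_mono mult_left_mono) auto
    finally show ?thesis .
  qed
  have "EE n (\<lambda>cb. err_prob PS W n R RK (code n cb)) \<le> EE n (\<lambda>cb. (\<Sum>m<Mn n. \<Sum>k<Kn n. \<Sum>y\<in>seqs n. H m k y cb) / real (NN n))"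
    by (rule EE_mono) (rule pt)
  also have "\<dots> = (\<Sum>m<Mn n. \<Sum>k<Kn n. \<Sum>y\<in>seqs n. EE n (H m k y)) / real (NN n)"
    by (simp add: EE_divide EE_sum finite_seqs)
  also have "\<dots> \<le> (\<Sum>m<Mn n. \<Sum>k<Kn n. ?C) / real (NN n)"
    by (intro divide_right_mono sum_mono EH) auto
  also have "\<dots> = ?C" using NN_pos[of n] by (simp add: NN_def)
  finally show ?thesis .
qed

end



lemma deriv_lt_one_pair:
  fixes p q :: "'a \<Rightarrow> 'b::finite \<Rightarrow> real"
  assumes A: "finite A" and s1: "(\<Sum>a\<in>A. \<Sum>c\<in>UNIV. p a c) = 1"
    and neg: "(\<Sum>a\<in>A. \<Sum>c\<in>UNIV. p a c * q a c) < 0"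
  shows "\<exists>d>0. \<forall>t. 0 < t \<and> t < d \<longrightarrow> (\<Sum>a\<in>A. \<Sum>c\<in>UNIV. p a c * exp (t * q a c)) < 1"
proof -
  have fA: "finite (A \<times> (UNIV :: 'b set))" using A by simp
  have s1': "(\<Sum>x\<in>A \<times> (UNIV :: 'b set). case_prod p x) = 1" using s1 by (simp add: sum.cartesian_product)
  have neg': "(\<Sum>x\<in>A \<times> (UNIV :: 'b set). case_prod p x * case_prod q x) < 0"
    using neg by (simp add: sum.cartesian_product case_prod_beta)
  obtain d where d: "d > 0" "\<forall>t. 0 < t \<and> t < d \<longrightarrow> (\<Sum>x\<in>A \<times> (UNIV :: 'b set). case_prod p x * exp (t * case_prod q x)) < 1"
    using deriv_lt_one[OF fA s1' neg'] by blast
  then show ?thesis by (intro exI[of _ d]) (simp add: sum.cartesian_product case_prod_beta)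
qed

context ach begin

definition "pY a c = PV a * Wv a c"
definition "cY a c = (if pY a c = 0 then 0 else \<gamma> * ln 2 + ln (PY c) - ln (Wv a c))"
definition "hY t = (\<Sum>a\<in>V. \<Sum>c\<in>UNIV. pY a c * exp (t * cY a c))"

lemma pY0: "a \<in> V \<Longrightarrow> pY a c \<ge> 0" unfolding pY_def by (intro mult_nonneg_nonneg PV0 Wv0)

lemma Aerr_chernoff:
  assumes t: "t \<ge> 0"
  shows "Aerr n \<le> hY t ^ n"
proof -
  let ?g = "\<lambda>a c. pY a c * exp (t * cY a c)"
  have pt: "PVn n v * (Wn n v y * (if T n v y then 0 else 1)) \<le> (\<Prod>i<n. ?g (v!i) (y!i))"
    if v: "v \<in> lset V n" for v y
  proof -
    have vi: "v ! i \<in> V" if "i < n" for i using v that unfolding lset_def by auto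
    have g0: "0 \<le> (\<Prod>i<n. ?g (v!i) (y!i))"
      by (intro prod_nonneg mult_nonneg_nonneg pY0 vi) auto
    have prodp: "PVn n v * Wn n v y = (\<Prod>i<n. pY (v!i) (y!i))"
      unfolding PVn_def prodn_def Wn_def pY_def by (simp add: prod.distrib)
    show ?thesis
    proof (cases "\<exists>i<n. pY (v!i) (y!i) = 0")
      case True
      then have "PVn n v * Wn n v y = 0" unfolding prodp by (auto intro: prod_zero)
      then have "PVn n v * (Wn n v y * (if T n v y then 0 else 1)) = 0" by simp
      then show ?thesis using g0 by linarith
    next
      case False
      then have pos: "pY (v!i) (y!i) > 0" if "i < n" for i
        using that pY0[OF vi[OF that], of "y!i"] by (auto simp: less_le)
      have Wpos: "Wv (v!i) (y!i) > 0" if "i < n" for i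
        using pos[OF that] PV0[OF vi[OF that]] Wv0[of "v!i" "y!i"] unfolding pY_def
        by (metis less_eq_real_def mult_zero_right)
      have PYpos: "PY (y!i) > 0" if "i < n" for i
        using PY_pos[OF vi[OF that], of "y!i"] pos[OF that] unfolding pY_def by (metis less_irrefl)
      show ?thesis
      proof (cases "T n v y")
        case True then show ?thesis using g0 by simp
      next
        case nT: False
        have Wnpos: "Wn n v y > 0" unfolding Wn_def using Wpos by (intro prod_pos) auto
        have PYnpos: "PYn n y > 0" unfolding PYn_def prodn_def using PYpos by (intro prod_pos) auto
        have le: "Wn n v y \<le> 2 powr (real n * \<gamma>) * PYn n y" using nT by (simp add: T_def)
        have "ln (Wn n v y) \<le> ln (2 powr (real n * \<gamma>) * PYn n y)"
          using le Wnpos by simp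
        also have "\<dots> = real n * \<gamma> * ln 2 + ln (PYn n y)"
          using PYnpos by (simp add: ln_mult ln_powr)
        finally have lnle: "ln (Wn n v y) \<le> real n * \<gamma> * ln 2 + ln (PYn n y)" .
        have lnW: "ln (Wn n v y) = (\<Sum>i<n. ln (Wv (v!i) (y!i)))"
        proof -
          have Wne: "\<And>i. i \<in> {..<n} \<Longrightarrow> Wv (v!i) (y!i) \<noteq> 0" using Wpos by (simp add: less_imp_neq[symmetric])
          show ?thesis unfolding Wn_def using ln_prod[of "{..<n}" "\<lambda>i. Wv (v!i) (y!i)", OF _ Wne] by simp
        qed
        have lnP: "ln (PYn n y) = (\<Sum>i<n. ln (PY (y!i)))"
        proof -
          have Wne: "\<And>i. i \<in> {..<n} \<Longrightarrow> PY (y!i) \<noteq> 0" using PYpos by (simp add: less_imp_neq[symmetric])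
          show ?thesis unfolding PYn_def prodn_def using ln_prod[of "{..<n}" "\<lambda>i. PY (y!i)", OF _ Wne] by simp
        qed
        have sumc: "(\<Sum>i<n. cY (v!i) (y!i)) = real n * \<gamma> * ln 2 + ln (PYn n y) - ln (Wn n v y)"
        proof -
          have "(\<Sum>i<n. cY (v!i) (y!i)) = (\<Sum>i<n. \<gamma> * ln 2 + ln (PY (y!i)) - ln (Wv (v!i) (y!i)))"
            unfolding cY_def apply (intro sum.cong refl) subgoal for i using pos[of i] by simp done
          then show ?thesis unfolding lnW lnP by (simp add: sum.distrib sum_subtractf)
        qed
        have "(\<Sum>i<n. cY (v!i) (y!i)) \<ge> 0" using sumc lnle by simp
        then have e1: "1 \<le> exp (t * (\<Sum>i<n. cY (v!i) (y!i)))" using t by simp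
        have "(\<Prod>i<n. ?g (v!i) (y!i)) = (\<Prod>i<n. pY (v!i) (y!i)) * exp (t * (\<Sum>i<n. cY (v!i) (y!i)))"
          by (simp add: prod.distrib exp_sum sum_distrib_left)
        also have "\<dots> \<ge> (\<Prod>i<n. pY (v!i) (y!i))"
        proof -
          have nn: "0 \<le> (\<Prod>i<n. pY (v!i) (y!i))" by (intro prod_nonneg pY0 vi) auto
          show ?thesis using mult_left_mono[OF e1 nn] by simp
        qed
        finally show ?thesis using nT prodp by simp
      qed
    qed
  qed
  have "Aerr n \<le> (\<Sum>v\<in>lset V n. \<Sum>y\<in>seqs n. \<Prod>i<n. ?g (v!i) (y!i))"
    unfolding Aerr_def by (intro sum_mono) (simp add: sum_distrib_left pt sum_mono)
  also have "\<dots> = hY t ^ n"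
    unfolding seqs_lset hY_def by (rule sum_prod_pairs[OF finV]) simp
  finally show ?thesis .
qed

lemma pY_sum1: "(\<Sum>a\<in>V. \<Sum>c\<in>UNIV. pY a c) = 1"
  unfolding pY_def by (simp add: sum_distrib_left[symmetric] Wv1 PV1)

lemma hY_mean: "(\<Sum>a\<in>V. \<Sum>c\<in>UNIV. pY a c * cY a c) = ln 2 * (\<gamma> - IY)"
proof -
  have "(\<Sum>a\<in>V. \<Sum>c\<in>UNIV. pY a c * cY a c) =
     (\<Sum>a\<in>V. \<Sum>c\<in>UNIV. \<gamma> * ln 2 * pY a c - ln 2 * (if PV a * Wv a c = 0 then 0
                     else PV a * Wv a c * ((ln (Wv a c) - ln (PY c)) / ln 2)))"
    using ln_gt_zero[of "2::real"] by (intro sum.cong refl) (auto simp: cY_def pY_def field_simps)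
  also have "\<dots> = \<gamma> * ln 2 * (\<Sum>a\<in>V. \<Sum>c\<in>UNIV. pY a c) - ln 2 * IY"
    unfolding IY_eq by (simp add: sum_subtractf sum_distrib_left)
  finally show ?thesis using pY_sum1 by (simp add: algebra_simps)
qed

lemma hY_lt1:
  assumes "\<gamma> < IY"
  shows "\<exists>t>0. hY t < 1"
proof -
  have neg: "(\<Sum>a\<in>V. \<Sum>c\<in>UNIV. pY a c * cY a c) < 0" using hY_mean assms ln_gt_zero[of "2::real"] by (simp add: mult_pos_neg)
  obtain d where d: "d > 0" "\<forall>t. 0 < t \<and> t < d \<longrightarrow> (\<Sum>a\<in>V. \<Sum>c\<in>UNIV. pY a c * exp (t * cY a c)) < 1"
    using deriv_lt_one_pair[OF finV pY_sum1 neg] by blast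
  have "hY (d/2) < 1" using d(2)[rule_format, of "d/2"] d(1) unfolding hY_def by simp
  then show ?thesis using d(1) by (intro exI[of _ "d/2"]) auto
qed

end



context ach begin

definition "Phat n cb z = (\<Sum>j<NN n. Zn n (cb ! j) z) / real (NN n)"

lemma prodnQ: "prodn n (Q0 PS W x0) = Qn n" unfolding Qn_def Q_def ..

lemma Phat0: "Phat n cb z \<ge> 0" unfolding Phat_def by (intro divide_nonneg_nonneg sum_nonneg Zn0) auto

lemma D_rep:
  "rel_entropy (seqs n) (warden_dist PS W n R RK (code n cb)) (prodn n (Q0 PS W x0))
   = (\<Sum>z\<in>seqs n. \<Sum>j<NN n. Zn n (cb ! j) z * ln (Phat n cb z / Qn n z)) / (real (NN n) * ln 2)"
proof -
  have "rel_entropy (seqs n) (warden_dist PS W n R RK (code n cb)) (prodn n (Q0 PS W x0))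
     = (\<Sum>z\<in>seqs n. (\<Sum>j<NN n. Zn n (cb ! j) z * ln (Phat n cb z / Qn n z)) / (real (NN n) * ln 2))"
    unfolding rel_entropy_def prodnQ warden_rep Phat_def[symmetric]
  proof (intro sum.cong refl)
    fix z
    show "(if Phat n cb z = 0 then 0 else Phat n cb z * log 2 (Phat n cb z / Qn n z)) =
          (\<Sum>j<NN n. Zn n (cb ! j) z * ln (Phat n cb z / Qn n z)) / (real (NN n) * ln 2)"
    proof (cases "Phat n cb z = 0")
      case True
      then have "(\<Sum>j<NN n. Zn n (cb ! j) z) = 0" using NN_pos[of n] by (simp add: Phat_def)
      then have "\<forall>j\<in>{..<NN n}. Zn n (cb ! j) z = 0" by (subst sum_nonneg_eq_0_iff[symmetric]) (auto simp: Zn0)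
      then show ?thesis using True by simp
    next
      case False
      then show ?thesis
        by (simp add: Phat_def log_def sum_distrib_right sum_divide_distrib)
    qed
  qed
  then show ?thesis by (simp add: sum_divide_distrib)
qed

lemma KL:
  assumes j: "j < NN n"
  shows "EE n (\<lambda>cb. Zn n (cb ! j) z * ln (Phat n cb z / Qn n z))
     \<le> (\<Sum>v\<in>lset V n. PVn n v * (Zn n v z * ln (1 + Zn n v z / (real (NN n) * Qn n z))))"
proof -
  define N where "N = real (NN n)"
  have N1: "N \<ge> 1" using NN_pos[of n] by (simp add: N_def)
  define a where "a v = Zn n v z / Qn n z" for v
  define Y where "Y v = a v / N + (N - 1) / N" for v
  define p2 where "p2 v = Zn n v z / Y v" for v
  have a0: "a v \<ge> 0" for v unfolding a_def using Qn_pos[of n z] by (simp add: Zn0)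
  have Y0: "Y v \<ge> 0" for v unfolding Y_def using a0[of v] N1 by simp
  have Phat_eq: "Phat n cb z / Qn n z = (\<Sum>j'<NN n. a (cb ! j')) / N" for cb
    unfolding Phat_def a_def N_def by (simp add: sum_divide_distrib mult.commute)
  have pt: "Zn n (cb ! j) z * ln (Phat n cb z / Qn n z)
     \<le> Zn n (cb ! j) z * ln (1 + a (cb ! j) / N) + (\<Sum>j'<NN n. p2 (cb ! j) * a (cb ! j')) / N - Zn n (cb ! j) z" for cb
  proof (cases "Zn n (cb ! j) z = 0")
    case True
    then show ?thesis by (simp add: p2_def)
  next
    case False
    let ?u = "cb ! j"
    let ?X = "(\<Sum>j'<NN n. a (cb ! j')) / N"
    have Zp: "Zn n ?u z > 0" using False Zn0[of n ?u z] by simp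
    have ap: "a ?u > 0" unfolding a_def using Zp Qn_pos[of n z] by simp
    have "a ?u \<le> (\<Sum>j'<NN n. a (cb ! j'))" using j a0 by (intro member_le_sum) auto
    then have Xge: "a ?u / N \<le> ?X" using N1 by (intro divide_right_mono) auto
    have "a ?u / N > 0" using ap N1 by simp
    then have Xp: "?X > 0" using Xge by linarith
    have Yp: "Y ?u > 0" unfolding Y_def using ap N1 by (simp add: add_pos_nonneg)
    have gen: "ln x \<le> ln y + x / y - 1" if "x > 0" "y > 0" for x y :: real
      using ln_le_minus_one[of "x/y"] ln_divide_pos[OF that] that by simp
    have l1: "ln ?X \<le> ln (Y ?u) + ?X / Y ?u - 1" by (rule gen[OF Xp Yp])
    have "Y ?u \<le> 1 + a ?u / N" unfolding Y_def using N1 by (simp add: diff_divide_distrib)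
    then have l2: "ln (Y ?u) \<le> ln (1 + a ?u / N)" using Yp by simp
    have "Zn n ?u z * ln ?X \<le> Zn n ?u z * (ln (1 + a ?u / N) + ?X / Y ?u - 1)"
      using l1 l2 Zp by (intro mult_left_mono) auto
    also have "\<dots> = Zn n ?u z * ln (1 + a ?u / N) + p2 ?u * ?X - Zn n ?u z"
      unfolding p2_def by (simp add: algebra_simps)
    also have "p2 ?u * ?X = (\<Sum>j'<NN n. p2 ?u * a (cb ! j')) / N"
      by (simp add: sum_distrib_left)
    finally show ?thesis unfolding Phat_eq .
  qed
  have suma: "(\<Sum>v\<in>lset V n. PVn n v * a v) = 1"
  proof -
    have "(\<Sum>v\<in>lset V n. PVn n v * a v) = (\<Sum>v\<in>lset V n. PVn n v * Zn n v z) / Qn n z"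
      unfolding a_def by (simp add: sum_divide_distrib)
    then show ?thesis using Qn_pos[of n z] by (simp add: PVn_Zn)
  qed
  have p2Y: "p2 v * Y v = Zn n v z" for v
  proof (cases "Zn n v z = 0")
    case False
    then have "a v > 0" unfolding a_def using Zn0[of n v z] Qn_pos[of n z] by simp
    then have "Y v > 0" unfolding Y_def using N1 by (simp add: add_pos_nonneg)
    then show ?thesis unfolding p2_def by simp
  qed (simp add: p2_def)
  have E2: "EE n (\<lambda>cb. (\<Sum>j'<NN n. p2 (cb ! j) * a (cb ! j')) / N) = (\<Sum>v\<in>lset V n. PVn n v * Zn n v z)"
  proof -
    have "EE n (\<lambda>cb. (\<Sum>j'<NN n. p2 (cb ! j) * a (cb ! j')) / N)
        = (\<Sum>j'<NN n. EE n (\<lambda>cb. p2 (cb ! j) * a (cb ! j'))) / N"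
      by (simp add: EE_divide EE_sum)
    also have "(\<Sum>j'<NN n. EE n (\<lambda>cb. p2 (cb ! j) * a (cb ! j')))
        = EE n (\<lambda>cb. p2 (cb ! j) * a (cb ! j)) + (\<Sum>j'\<in>{..<NN n}-{j}. EE n (\<lambda>cb. p2 (cb ! j) * a (cb ! j')))"
      using j by (subst sum.remove[of _ j]) auto
    also have "EE n (\<lambda>cb. p2 (cb ! j) * a (cb ! j)) = (\<Sum>v\<in>lset V n. PVn n v * (p2 v * a v))"
      by (rule EE_one[OF j])
    also have "(\<Sum>j'\<in>{..<NN n}-{j}. EE n (\<lambda>cb. p2 (cb ! j) * a (cb ! j')))
        = (\<Sum>j'\<in>{..<NN n}-{j}. (\<Sum>v\<in>lset V n. PVn n v * p2 v))"
      using j by (intro sum.cong refl) (simp add: EE_two suma)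
    also have "\<dots> = (N - 1) * (\<Sum>v\<in>lset V n. PVn n v * p2 v)"
      using j NN_pos[of n] by (simp add: N_def of_nat_diff)
    finally have "EE n (\<lambda>cb. (\<Sum>j'<NN n. p2 (cb ! j) * a (cb ! j')) / N)
        = ((\<Sum>v\<in>lset V n. PVn n v * (p2 v * a v)) + (N - 1) * (\<Sum>v\<in>lset V n. PVn n v * p2 v)) / N"
      by simp
    also have "\<dots> = (\<Sum>v\<in>lset V n. PVn n v * (p2 v * a v) + (N - 1) * (PVn n v * p2 v)) / N"
      by (simp add: sum.distrib sum_distrib_left)
    also have "\<dots> = (\<Sum>v\<in>lset V n. PVn n v * (p2 v * Y v))"
      unfolding sum_divide_distrib Y_def using N1 by (intro sum.cong refl) (simp add: field_simps)
    finally show ?thesis by (simp add: p2Y)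
  qed
  have "EE n (\<lambda>cb. Zn n (cb ! j) z * ln (Phat n cb z / Qn n z))
      \<le> EE n (\<lambda>cb. Zn n (cb ! j) z * ln (1 + a (cb ! j) / N) + (\<Sum>j'<NN n. p2 (cb ! j) * a (cb ! j')) / N - Zn n (cb ! j) z)"
    by (rule EE_mono) (rule pt)
  also have "\<dots> = (\<Sum>v\<in>lset V n. PVn n v * (Zn n v z * ln (1 + a v / N)))"
    unfolding EE_diff EE_add E2 EE_one[OF j, of "\<lambda>v. Zn n v z * ln (1 + a v / N)"] EE_one[OF j, of "\<lambda>v. Zn n v z"] by simp
  finally show ?thesis unfolding a_def N_def by (simp add: mult.assoc mult.commute)
qed

lemma EE_D:
  "EE n (\<lambda>cb. rel_entropy (seqs n) (warden_dist PS W n R RK (code n cb)) (prodn n (Q0 PS W x0)))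
   \<le> (\<Sum>z\<in>seqs n. \<Sum>v\<in>lset V n. PVn n v * (Zn n v z * ln (1 + Zn n v z / (real (NN n) * Qn n z)))) / ln 2"
proof -
  let ?F = "\<lambda>z. (\<Sum>v\<in>lset V n. PVn n v * (Zn n v z * ln (1 + Zn n v z / (real (NN n) * Qn n z))))"
  have "EE n (\<lambda>cb. rel_entropy (seqs n) (warden_dist PS W n R RK (code n cb)) (prodn n (Q0 PS W x0)))
      = (\<Sum>z\<in>seqs n. \<Sum>j<NN n. EE n (\<lambda>cb. Zn n (cb ! j) z * ln (Phat n cb z / Qn n z))) / (real (NN n) * ln 2)"
    unfolding D_rep by (simp add: EE_divide EE_sum finite_seqs)
  also have "\<dots> \<le> (\<Sum>z\<in>seqs n. \<Sum>j<NN n. ?F z) / (real (NN n) * ln 2)"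
    by (intro divide_right_mono sum_mono KL) auto
  also have "\<dots> = (\<Sum>z\<in>seqs n. ?F z) / ln 2"
    using NN_pos[of n] by (simp add: sum_divide_distrib)
  finally show ?thesis .
qed

end



context ach begin

definition "pZ a c = PV a * Zv a c"
definition "cZ a c = (if pZ a c = 0 then 0 else ln (Zv a c) - ln (Q c) - (R + RK) * ln 2)"
definition "hZ r = (\<Sum>a\<in>V. \<Sum>c\<in>UNIV. pZ a c * exp (r * cZ a c))"

lemma pZ0: "a \<in> V \<Longrightarrow> pZ a c \<ge> 0" unfolding pZ_def by (intro mult_nonneg_nonneg PV0 Zv0)

lemma Mn_ge: "real (Mn n) \<ge> 2 powr (real n * R)"
  unfolding Mn_def num_msgs_def by (simp add: real_nat_ceiling_ge)

lemma Mn_le: "real (Mn n) - 1 \<le> 2 powr (real n * R)"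
proof -
  have "real_of_int \<lceil>2 powr (real n * R)\<rceil> < 2 powr (real n * R) + 1" using ceiling_correct[of "2 powr (real n * R)"] by linarith
  moreover have p: "2 powr (real n * R) > 0" by simp
  moreover have "\<lceil>2 powr (real n * R)\<rceil> \<ge> 0" using p by linarith
  ultimately show ?thesis unfolding Mn_def num_msgs_def by simp
qed

lemma Kn_ge: "real (Kn n) \<ge> 2 powr (real n * RK) / 2"
proof -
  let ?y = "2 powr (real n * RK)"
  have y1: "?y \<ge> 1" using RK by (simp add: ge_one_powr_ge_zero)
  have fl: "real_of_int \<lfloor>?y\<rfloor> > ?y - 1" using floor_correct[of ?y] by linarith
  have f1: "real_of_int \<lfloor>?y\<rfloor> \<ge> 1" using y1 by simp
  have "real_of_int \<lfloor>?y\<rfloor> \<ge> ?y / 2"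
  proof (cases "?y \<ge> 2")
    case True then show ?thesis using fl by linarith
  next
    case False then show ?thesis using f1 by linarith
  qed
  moreover have "\<lfloor>?y\<rfloor> \<ge> 0" using y1 by simp
  ultimately show ?thesis unfolding Kn_def num_keys_def by simp
qed

lemma lnNN: "ln (real (NN n)) \<ge> real n * (R + RK) * ln 2 - ln 2"
proof -
  have ge: "real (NN n) \<ge> 2 powr (real n * R) * (2 powr (real n * RK) / 2)"
    unfolding NN_def of_nat_mult by (intro mult_mono Mn_ge Kn_ge) auto
  have "ln (2 powr (real n * R) * (2 powr (real n * RK) / 2)) = real n * R * ln 2 + real n * RK * ln 2 - ln 2"
    by (simp add: ln_mult ln_div ln_powr)
  moreover have "ln (2 powr (real n * R) * (2 powr (real n * RK) / 2)) \<le> ln (real (NN n))"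
  proof -
    have pos: "0 < 2 powr (real n * R) * (2 powr (real n * RK) / 2)" by simp
    have N0: "0 < real (NN n)" using NN_pos[of n] by simp
    show ?thesis using ln_le_cancel_iff[OF pos N0] ge by simp
  qed
  ultimately show ?thesis by (simp add: algebra_simps)
qed

lemma Dsum_chernoff:
  assumes r: "0 < r" "r \<le> 1"
  shows "(\<Sum>z\<in>seqs n. \<Sum>v\<in>lset V n. PVn n v * (Zn n v z * ln (1 + Zn n v z / (real (NN n) * Qn n z))))
     \<le> 2 / r * hZ r ^ n"
proof -
  let ?g = "\<lambda>a c. pZ a c * exp (r * cZ a c)"
  let ?N = "real (NN n)"
  have N0: "?N > 0" using NN_pos[of n] by simp
  have pt: "PVn n v * (Zn n v z * ln (1 + Zn n v z / (?N * Qn n z))) \<le> 2 / r * (\<Prod>i<n. ?g (v!i) (z!i))"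
    if v: "v \<in> lset V n" for v z
  proof -
    have vi: "v ! i \<in> V" if "i < n" for i using v that unfolding lset_def by auto
    have g0: "0 \<le> (\<Prod>i<n. ?g (v!i) (z!i))"
      by (intro prod_nonneg mult_nonneg_nonneg pZ0 vi) auto
    have prodp: "PVn n v * Zn n v z = (\<Prod>i<n. pZ (v!i) (z!i))"
      unfolding PVn_def prodn_def Zn_def pZ_def by (simp add: prod.distrib)
    show ?thesis
    proof (cases "\<exists>i<n. pZ (v!i) (z!i) = 0")
      case True
      then have "PVn n v * Zn n v z = 0" unfolding prodp by (auto intro: prod_zero)
      then have eq0: "PVn n v * (Zn n v z * ln (1 + Zn n v z / (?N * Qn n z))) = 0" by auto
      have "0 \<le> 2 / r * (\<Prod>i<n. ?g (v!i) (z!i))" using g0 r by simp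
      then show ?thesis using eq0 by linarith
    next
      case False
      then have pos: "pZ (v!i) (z!i) > 0" if "i < n" for i
        using that pZ0[OF vi[OF that], of "z!i"] by (auto simp: less_le)
      have Zpos: "Zv (v!i) (z!i) > 0" if "i < n" for i
        using pos[OF that] PV0[OF vi[OF that]] Zv0[of "v!i" "z!i"] unfolding pZ_def
        by (metis less_eq_real_def mult_zero_right)
      have Znpos: "Zn n v z > 0" unfolding Zn_def using Zpos by (intro prod_pos) auto
      have PVi: "PV (v!i) > 0" if "i < n" for i
        using pos[OF that] PV0[OF vi[OF that]] Zv0[of "v!i" "z!i"] unfolding pZ_def
        by (metis less_eq_real_def mult_zero_left)
      have PVpos: "PVn n v > 0" unfolding PVn_def prodn_def using PVi by (intro prod_pos) auto
      define x where "x = Zn n v z / (?N * Qn n z)"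
      have xpos: "x > 0" unfolding x_def using Znpos N0 Qn_pos[of n z] by simp
      have lnZ: "ln (Zn n v z) = (\<Sum>i<n. ln (Zv (v!i) (z!i)))"
      proof -
        have ne: "\<And>i. i \<in> {..<n} \<Longrightarrow> Zv (v!i) (z!i) \<noteq> 0" using Zpos by (simp add: less_imp_neq[symmetric])
        show ?thesis unfolding Zn_def using ln_prod[of "{..<n}" "\<lambda>i. Zv (v!i) (z!i)", OF _ ne] by simp
      qed
      have lnQ: "ln (Qn n z) = (\<Sum>i<n. ln (Q (z!i)))"
      proof -
        have ne: "\<And>i. i \<in> {..<n} \<Longrightarrow> Q (z!i) \<noteq> 0" using Qpos' by (simp add: less_imp_neq[symmetric])
        show ?thesis unfolding Qn_def prodn_def using ln_prod[of "{..<n}" "\<lambda>i. Q (z!i)", OF _ ne] by simp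
      qed
      have sumc: "(\<Sum>i<n. cZ (v!i) (z!i)) = ln (Zn n v z) - ln (Qn n z) - real n * (R + RK) * ln 2"
      proof -
        have "(\<Sum>i<n. cZ (v!i) (z!i)) = (\<Sum>i<n. ln (Zv (v!i) (z!i)) - ln (Q (z!i)) - (R + RK) * ln 2)"
          unfolding cZ_def apply (intro sum.cong refl) subgoal for i using pos[of i] by simp done
        then show ?thesis unfolding lnZ lnQ by (simp add: sum_subtractf)
      qed
      have lnx: "ln x = ln (Zn n v z) - ln (Qn n z) - ln ?N"
        unfolding x_def using Znpos N0 Qn_pos[of n z] by (simp add: ln_div ln_mult)
      have lnx_le: "ln x \<le> (\<Sum>i<n. cZ (v!i) (z!i)) + ln 2"
        using lnx sumc lnNN[of n] by linarith
      have "ln (1 + x) \<le> x powr r / r" using xpos r by (intro ln_one_plus_le_powr) auto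
      also have "x powr r = exp (r * ln x)" using xpos by (simp add: powr_def mult.commute)
      also have "\<dots> \<le> exp (r * (\<Sum>i<n. cZ (v!i) (z!i)) + r * ln 2)"
        using lnx_le r by (simp add: distrib_left[symmetric])
      also have "\<dots> = exp (r * (\<Sum>i<n. cZ (v!i) (z!i))) * exp (r * ln 2)" by (simp add: exp_add)
      also have "\<dots> \<le> exp (r * (\<Sum>i<n. cZ (v!i) (z!i))) * 2"
      proof -
        have "r * ln 2 \<le> ln 2" using r ln_gt_zero[of "2::real"] by (simp add: mult_le_cancel_right1)
        then have "exp (r * ln 2) \<le> exp (ln 2)" by (simp only: exp_le_cancel_iff)
        then have e: "exp (r * ln 2) \<le> 2" by simp
        show ?thesis using e by (intro mult_left_mono) auto
      qed
      finally have l: "ln (1 + x) \<le> exp (r * (\<Sum>i<n. cZ (v!i) (z!i))) * 2 / r" using r by (simp add: divide_right_mono)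
      have "PVn n v * (Zn n v z * ln (1 + x)) = (PVn n v * Zn n v z) * ln (1 + x)" by simp
      also have "\<dots> \<le> (PVn n v * Zn n v z) * (exp (r * (\<Sum>i<n. cZ (v!i) (z!i))) * 2 / r)"
        using l PVpos Znpos by (intro mult_left_mono) auto
      also have "\<dots> = 2 / r * (\<Prod>i<n. ?g (v!i) (z!i))"
        unfolding prodp by (simp add: prod.distrib exp_sum sum_distrib_left)
      finally show ?thesis unfolding x_def .
    qed
  qed
  have "(\<Sum>z\<in>seqs n. \<Sum>v\<in>lset V n. PVn n v * (Zn n v z * ln (1 + Zn n v z / (?N * Qn n z))))
      \<le> (\<Sum>z\<in>seqs n. \<Sum>v\<in>lset V n. 2 / r * (\<Prod>i<n. ?g (v!i) (z!i)))"
    by (intro sum_mono pt) auto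
  also have "\<dots> = 2 / r * (\<Sum>v\<in>lset V n. \<Sum>z\<in>seqs n. \<Prod>i<n. ?g (v!i) (z!i))"
    by (subst sum.swap) (simp add: sum_distrib_left)
  also have "(\<Sum>v\<in>lset V n. \<Sum>z\<in>seqs n. \<Prod>i<n. ?g (v!i) (z!i)) = hZ r ^ n"
    unfolding seqs_lset hZ_def by (rule sum_prod_pairs[OF finV]) simp
  finally show ?thesis .
qed

lemma pZ_sum1: "(\<Sum>a\<in>V. \<Sum>c\<in>UNIV. pZ a c) = 1"
  unfolding pZ_def by (simp add: sum_distrib_left[symmetric] Zv1 PV1)

lemma hZ_mean: "(\<Sum>a\<in>V. \<Sum>c\<in>UNIV. pZ a c * cZ a c) = ln 2 * (IZ - (R + RK))"
proof -
  have "(\<Sum>a\<in>V. \<Sum>c\<in>UNIV. pZ a c * cZ a c) =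
     (\<Sum>a\<in>V. \<Sum>c\<in>UNIV. ln 2 * (if PV a * Zv a c = 0 then 0
                     else PV a * Zv a c * ((ln (Zv a c) - ln (Q c)) / ln 2)) - (R + RK) * ln 2 * pZ a c)"
    using ln_gt_zero[of "2::real"] by (intro sum.cong refl) (auto simp: cZ_def pZ_def field_simps)
  also have "\<dots> = ln 2 * IZ - (R + RK) * ln 2 * (\<Sum>a\<in>V. \<Sum>c\<in>UNIV. pZ a c)"
    unfolding IZ_eq by (simp add: sum_subtractf sum_distrib_left)
  finally show ?thesis using pZ_sum1 by (simp add: algebra_simps)
qed

lemma hZ_lt1: "\<exists>r>0. r \<le> 1 \<and> hZ r < 1"
proof -
  have neg: "(\<Sum>a\<in>V. \<Sum>c\<in>UNIV. pZ a c * cZ a c) < 0"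
    using hZ_mean RZ ln_gt_zero[of "2::real"] by (simp add: mult_pos_neg)
  obtain d where d: "d > 0" "\<forall>t. 0 < t \<and> t < d \<longrightarrow> (\<Sum>a\<in>V. \<Sum>c\<in>UNIV. pZ a c * exp (t * cZ a c)) < 1"
    using deriv_lt_one_pair[OF finV pZ_sum1 neg] by blast
  define r where "r = min (d/2) 1"
  have "hZ r < 1" using d(2)[rule_format, of r] d(1) unfolding hZ_def r_def by simp
  moreover have "r > 0" "r \<le> 1" using d(1) by (auto simp: r_def)
  ultimately show ?thesis by blast
qed

end



context ach begin

lemma sum_Qn: "(\<Sum>z\<in>seqs n. Qn n z) = 1"
proof -
  have "(\<Sum>z\<in>seqs n. Qn n z) = (\<Sum>z\<in>seqs n. \<Sum>v\<in>lset V n. PVn n v * Zn n v z)"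
    by (simp add: PVn_Zn)
  also have "\<dots> = (\<Sum>v\<in>lset V n. PVn n v * (\<Sum>z\<in>seqs n. Zn n v z))"
    by (subst sum.swap) (simp add: sum_distrib_left)
  finally show ?thesis by (simp add: Zn_sum1 PVn_sum1)
qed

lemma sum_Phat: "(\<Sum>z\<in>seqs n. Phat n cb z) = 1"
proof -
  have "(\<Sum>z\<in>seqs n. Phat n cb z) = (\<Sum>j<NN n. \<Sum>z\<in>seqs n. Zn n (cb ! j) z) / real (NN n)"
    unfolding Phat_def by (subst sum.swap) (simp add: sum_divide_distrib)
  then show ?thesis using NN_pos[of n] by (simp add: Zn_sum1)
qed

lemma D_nonneg: "rel_entropy (seqs n) (warden_dist PS W n R RK (code n cb)) (prodn n (Q0 PS W x0)) \<ge> 0"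
proof -
  have l2: "ln (2::real) > 0" by simp
  have "rel_entropy (seqs n) (warden_dist PS W n R RK (code n cb)) (prodn n (Q0 PS W x0))
     = (\<Sum>z\<in>seqs n. if Phat n cb z = 0 then 0 else Phat n cb z * log 2 (Phat n cb z / Qn n z))"
    unfolding rel_entropy_def prodnQ warden_rep Phat_def ..
  also have "\<dots> \<ge> (\<Sum>z\<in>seqs n. (Phat n cb z - Qn n z) / ln 2)"
  proof (intro sum_mono)
    fix z
    let ?P = "Phat n cb z" and ?Q = "Qn n z"
    have Qp: "?Q > 0" by (rule Qn_pos)
    show "(?P - ?Q) / ln 2 \<le> (if ?P = 0 then 0 else ?P * log 2 (?P / ?Q))"
    proof (cases "?P = 0")
      case True then show ?thesis using Qp l2 by simp
    next
      case False
      then have Pp: "?P > 0" using Phat0[of n cb z] by simp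
      have "ln (?Q / ?P) \<le> ?Q / ?P - 1" using Pp Qp by (intro ln_le_minus_one) simp
      then have "1 - ?Q / ?P \<le> ln (?P / ?Q)" using Pp Qp by (simp add: ln_div)
      then have "?P * (1 - ?Q / ?P) \<le> ?P * ln (?P / ?Q)" using Pp by (intro mult_left_mono) auto
      then have "?P - ?Q \<le> ?P * ln (?P / ?Q)" using Pp by (simp add: algebra_simps)
      then have "(?P - ?Q) / ln 2 \<le> ?P * ln (?P / ?Q) / ln 2" using l2 by (intro divide_right_mono) auto
      then show ?thesis using False by (simp add: log_def)
    qed
  qed
  also have "(\<Sum>z\<in>seqs n. (Phat n cb z - Qn n z) / ln 2) = 0"
    by (simp add: sum_divide_distrib[symmetric] sum_subtractf sum_Qn sum_Phat)
  finally show ?thesis .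
qed

definition "bm = (\<Sum>x\<in>UNIV. b x)"

lemma b_le: "b x \<le> bm" unfolding bm_def using bnn by (intro member_le_sum) auto
lemma bm0: "bm \<ge> 0" unfolding bm_def using bnn by (intro sum_nonneg) auto
lemma beta0: "beta v \<ge> 0" unfolding beta_def using bnn by (intro sum_nonneg mult_nonneg_nonneg PS0) auto
lemma beta_le: "beta v \<le> bm"
proof -
  have "beta v \<le> (\<Sum>s\<in>UNIV. PS s * bm)" unfolding beta_def by (intro sum_mono mult_left_mono b_le PS0)
  also have "\<dots> = bm" by (simp add: sum_distrib_right[symmetric] PS1)
  finally show ?thesis .
qed

lemma cvec_le: "n > 0 \<Longrightarrow> cvec n v \<le> bm"
proof -
  assume n: "n > 0"
  have "(\<Sum>i<n. beta (v!i)) \<le> (\<Sum>i<n. bm)" by (intro sum_mono beta_le)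
  then show ?thesis using n unfolding cvec_def by (simp add: divide_le_eq mult.commute)
qed

lemma EE_cost: "EE n (\<lambda>cb. max 0 (exp_cost PS b n R RK (code n cb) - B)) \<le> (\<Sum>v\<in>lset V n. PVn n v * max 0 (cvec n v - B))"
proof -
  let ?N = "real (NN n)"
  have N0: "?N > 0" using NN_pos[of n] by simp
  have pt: "max 0 (exp_cost PS b n R RK (code n cb) - B) \<le> (\<Sum>j<NN n. max 0 (cvec n (cb ! j) - B)) / ?N" for cb
  proof -
    have "exp_cost PS b n R RK (code n cb) - B = (\<Sum>j<NN n. cvec n (cb ! j) - B) / ?N"
      unfolding cost_rep using N0 by (simp add: sum_subtractf diff_divide_distrib)
    also have "\<dots> \<le> (\<Sum>j<NN n. max 0 (cvec n (cb ! j) - B)) / ?N"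
      using N0 by (intro divide_right_mono sum_mono) auto
    finally show ?thesis using N0 by (simp add: sum_nonneg)
  qed
  have "EE n (\<lambda>cb. max 0 (exp_cost PS b n R RK (code n cb) - B)) \<le> EE n (\<lambda>cb. (\<Sum>j<NN n. max 0 (cvec n (cb ! j) - B)) / ?N)"
    by (rule EE_mono) (rule pt)
  also have "\<dots> = (\<Sum>j<NN n. EE n (\<lambda>cb. max 0 (cvec n (cb ! j) - B))) / ?N"
    by (simp add: EE_divide EE_sum)
  also have "\<dots> = (\<Sum>j<NN n. (\<Sum>v\<in>lset V n. PVn n v * max 0 (cvec n v - B))) / ?N"
    by (intro arg_cong[where f="\<lambda>x. x / ?N"] sum.cong refl) (simp add: EE_one[where \<phi>="\<lambda>v. max 0 (cvec n v - B)"])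
  also have "\<dots> = (\<Sum>v\<in>lset V n. PVn n v * max 0 (cvec n v - B))" using N0 by simp
  finally show ?thesis .
qed

definition "hC \<eta> t = (\<Sum>a\<in>V. PV a * exp (t * (beta a - B - \<eta>)))"

lemma cost_chernoff:
  assumes n: "n > 0" and t: "t \<ge> 0" and eta: "\<eta> > 0"
  shows "(\<Sum>v\<in>lset V n. PVn n v * max 0 (cvec n v - B)) \<le> \<eta> + bm * hC \<eta> t ^ n"
proof -
  let ?e = "\<lambda>a. exp (t * (beta a - B - \<eta>))"
  have pt: "max 0 (cvec n v - B) \<le> \<eta> + bm * (\<Prod>i<n. ?e (v!i))" for v
  proof -
    have ep: "(\<Prod>i<n. ?e (v!i)) = exp (t * (\<Sum>i<n. beta (v!i) - B - \<eta>))"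
      by (simp add: exp_sum sum_distrib_left)
    have e0: "0 \<le> bm * (\<Prod>i<n. ?e (v!i))" using bm0 by (simp add: prod_nonneg)
    show ?thesis
    proof (cases "cvec n v \<le> B + \<eta>")
      case True then show ?thesis using e0 eta by simp
    next
      case False
      then have "(\<Sum>i<n. beta (v!i)) > real n * (B + \<eta>)" using n unfolding cvec_def
        by (simp add: not_le pos_less_divide_eq mult.commute)
      then have "(\<Sum>i<n. beta (v!i) - B - \<eta>) > 0" by (simp add: sum_subtractf algebra_simps)
      then have "1 \<le> exp (t * (\<Sum>i<n. beta (v!i) - B - \<eta>))" using t by simp
      then have "bm \<le> bm * (\<Prod>i<n. ?e (v!i))" using bm0 ep by (simp add: mult_le_cancel_left1)
      moreover have "max 0 (cvec n v - B) \<le> bm" using cvec_le[OF n, of v] B bm0 by simp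
      ultimately show ?thesis using eta by simp
    qed
  qed
  have "(\<Sum>v\<in>lset V n. PVn n v * max 0 (cvec n v - B)) \<le> (\<Sum>v\<in>lset V n. PVn n v * (\<eta> + bm * (\<Prod>i<n. ?e (v!i))))"
    by (intro sum_mono mult_left_mono pt PVn0)
  also have "\<dots> = \<eta> + bm * (\<Sum>v\<in>lset V n. \<Prod>i<n. PV (v!i) * ?e (v!i))"
    using PVn_sum1[of n, unfolded PVn_def prodn_def]
    by (simp add: distrib_left sum.distrib sum_distrib_left[symmetric] PVn_def prodn_def prod.distrib ac_simps)
  also have "(\<Sum>v\<in>lset V n. \<Prod>i<n. PV (v!i) * ?e (v!i)) = hC \<eta> t ^ n"
    unfolding hC_def using sum_prod_lset[OF finV, where n=n and f="\<lambda>i a. PV a * ?e a"] by simp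
  finally show ?thesis .
qed

lemma hC_lt1:
  assumes eta: "\<eta> > 0"
  shows "\<exists>t>0. hC \<eta> t < 1"
proof -
  have "(\<Sum>a\<in>V. PV a * beta a) = (\<Sum>v\<in>V. \<Sum>s\<in>UNIV. PV v * PS s * b (xf v s))"
    unfolding beta_def by (simp add: sum_distrib_left ac_simps)
  then have mb: "(\<Sum>a\<in>V. PV a * beta a) \<le> B" using cost by simp
  have "(\<Sum>a\<in>V. PV a * (beta a - B - \<eta>)) = (\<Sum>a\<in>V. PV a * beta a - (B + \<eta>) * PV a)"
    by (intro sum.cong refl) (simp add: algebra_simps)
  also have "\<dots> = (\<Sum>a\<in>V. PV a * beta a) - (B + \<eta>)"
    by (simp add: sum_subtractf sum_distrib_left[symmetric] PV1)
  finally have "(\<Sum>a\<in>V. PV a * (beta a - B - \<eta>)) = (\<Sum>a\<in>V. PV a * beta a) - (B + \<eta>)" .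
  then have neg: "(\<Sum>a\<in>V. PV a * (beta a - B - \<eta>)) < 0" using mb eta by simp
  obtain d where d: "d > 0" "\<forall>t. 0 < t \<and> t < d \<longrightarrow> (\<Sum>a\<in>V. PV a * exp (t * (beta a - B - \<eta>))) < 1"
    using deriv_lt_one[OF finV PV1 neg] by blast
  have "hC \<eta> (d/2) < 1" using d(2)[rule_format, of "d/2"] d(1) unfolding hC_def by simp
  then show ?thesis using d(1) by (intro exI[of _ "d/2"]) auto
qed

end



context ach begin

lemma hY0: "hY t \<ge> 0" unfolding hY_def by (intro sum_nonneg mult_nonneg_nonneg pY0) auto
lemma hZ0: "hZ t \<ge> 0" unfolding hZ_def by (intro sum_nonneg mult_nonneg_nonneg pZ0) auto
lemma hC0: "hC e t \<ge> 0" unfolding hC_def by (intro sum_nonneg mult_nonneg_nonneg PV0) auto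

lemma achievable: "achievable_causal PS W x0 b RK B R"
proof -
  define err where "err n cb = err_prob PS W n R RK (code n cb)" for n cb
  define Dv where "Dv n cb = rel_entropy (seqs n) (warden_dist PS W n R RK (code n cb)) (prodn n (Q0 PS W x0))" for n cb
  define ct where "ct n cb = exp_cost PS b n R RK (code n cb)" for n cb
  define Phi where "Phi n cb = err n cb + Dv n cb + max 0 (ct n cb - B)" for n cb
  define E where "E n = EE n (Phi n)" for n
  obtain r where r: "0 < r" "r \<le> 1" "hZ r < 1" using hZ_lt1 by auto
  obtain t where t: "t > 0" "R \<noteq> 0 \<longrightarrow> hY t < 1"
  proof (cases "R = 0")
    case True then show ?thesis using that[of 1] by simp
  next
    case False
    then have "\<gamma> < IY" using Rg by simp
    then obtain t where "t > 0" "hY t < 1" using hY_lt1 by auto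
    then show ?thesis using that by auto
  qed
  define errB where "errB n = (if R = 0 then 0 else hY t ^ n + (2 powr (R - \<gamma>)) ^ n)" for n
  have err0: "err n cb \<ge> 0" for n cb unfolding err_def by (rule err_nonneg)
  have D0: "Dv n cb \<ge> 0" for n cb unfolding Dv_def by (rule D_nonneg)
  have EEerr: "EE n (err n) \<le> errB n" for n
  proof (cases "R = 0")
    case True
    have "Mn n = 1" unfolding Mn_def num_msgs_def using True by simp
    then have "err n = (\<lambda>cb. 0)" unfolding err_def by (simp add: err_Mn1 fun_eq_iff)
    then have "EE n (err n) = 0" by (simp add: EE_const)
    moreover have "errB n = 0" using True by (simp add: errB_def)
    ultimately show ?thesis by simp
  next
    case False
    have a: "Aerr n \<le> hY t ^ n" using t by (intro Aerr_chernoff) auto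
    have "real (Mn n - 1) = real (Mn n) - 1" using Mn_pos[of n] by (simp add: of_nat_diff)
    then have m: "real (Mn n - 1) \<le> 2 powr (real n * R)" using Mn_le[of n] by simp
    have "real (Mn n - 1) * 2 powr (-(real n * \<gamma>)) \<le> 2 powr (real n * R) * 2 powr (-(real n * \<gamma>))"
      using m by (intro mult_right_mono) auto
    also have "\<dots> = 2 powr ((R - \<gamma>) * real n)" by (simp add: powr_add[symmetric] algebra_simps)
    also have "\<dots> = (2 powr (R - \<gamma>)) ^ n" by (simp add: powr_powr[symmetric] powr_realpow)
    finally show ?thesis using EE_err[of n] a False unfolding err_def errB_def by simp
  qed
  have EED: "EE n (Dv n) \<le> 2 / r * hZ r ^ n / ln 2" for n
  proof -
    have "EE n (Dv n) \<le> (\<Sum>z\<in>seqs n. \<Sum>v\<in>lset V n. PVn n v * (Zn n v z * ln (1 + Zn n v z / (real (NN n) * Qn n z)))) / ln 2"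
      unfolding Dv_def by (rule EE_D)
    also have "\<dots> \<le> 2 / r * hZ r ^ n / ln 2"
      using Dsum_chernoff[OF r(1,2), of n] by (intro divide_right_mono) auto
    finally show ?thesis .
  qed
  have Ebound: "E n \<le> errB n + 2 / r * hZ r ^ n / ln 2 + (e + bm * hC e te ^ n)"
    if n: "n > 0" and e: "e > 0" and te: "te > 0" for n e te
  proof -
    have "E n = EE n (err n) + EE n (Dv n) + EE n (\<lambda>cb. max 0 (ct n cb - B))"
      unfolding E_def Phi_def by (simp add: EE_add)
    also have "EE n (\<lambda>cb. max 0 (ct n cb - B)) \<le> e + bm * hC e te ^ n"
      unfolding ct_def using EE_cost[of n] cost_chernoff[OF n _ e, of te] te by simp
    finally show ?thesis using EEerr[of n] EED[of n] by simp
  qed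
  have E0: "E n \<ge> 0" for n
    unfolding E_def Phi_def using err0 D0 by (intro EE_nonneg add_nonneg_nonneg) auto
  have lim_a: "(\<lambda>n. errB n + 2 / r * hZ r ^ n / ln 2) \<longlonglongrightarrow> 0"
  proof -
    have l1: "errB \<longlonglongrightarrow> 0"
    proof (cases "R = 0")
      case True
      then have "errB = (\<lambda>_. 0)" by (simp add: errB_def fun_eq_iff)
      then show ?thesis by simp
    next
      case False
      then have g: "R < \<gamma>" using Rg by simp
      have "norm (hY t) < 1" using t False hY0[of t] by simp
      moreover have "norm (2 powr (R - \<gamma>)) < 1" using g powr_less_mono[of "R - \<gamma>" 0 "2::real"] by simp
      ultimately have "(\<lambda>n. hY t ^ n + (2 powr (R - \<gamma>)) ^ n) \<longlonglongrightarrow> 0 + 0"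
        by (intro tendsto_add LIMSEQ_power_zero)
      moreover have "errB = (\<lambda>n. hY t ^ n + (2 powr (R - \<gamma>)) ^ n)" using False by (simp add: errB_def fun_eq_iff)
      ultimately show ?thesis by simp
    qed
    have "norm (hZ r) < 1" using r hZ0[of r] by simp
    then have "(\<lambda>n. 2 / r * hZ r ^ n / ln 2) \<longlonglongrightarrow> 2 / r * 0 / ln 2"
      by (intro tendsto_divide tendsto_mult tendsto_const LIMSEQ_power_zero) auto
    then show ?thesis using tendsto_add[OF l1] by fastforce
  qed
  have limE: "E \<longlonglongrightarrow> 0"
  proof (rule LIMSEQ_I)
    fix eps :: real assume eps: "eps > 0"
    obtain te where te: "te > 0" "hC (eps/3) te < 1" using hC_lt1[of "eps/3"] eps by auto
    have "norm (hC (eps/3) te) < 1" using te hC0[of "eps/3" te] by simp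
    then have "(\<lambda>n. bm * hC (eps/3) te ^ n) \<longlonglongrightarrow> bm * 0"
      by (intro tendsto_mult tendsto_const LIMSEQ_power_zero)
    then obtain N2 where N2: "\<forall>n\<ge>N2. norm (bm * hC (eps/3) te ^ n - 0) < eps/3"
      using LIMSEQ_D[of _ 0 "eps/3"] eps by fastforce
    obtain N1 where N1: "\<forall>n\<ge>N1. norm (errB n + 2 / r * hZ r ^ n / ln 2 - 0) < eps/3"
      using LIMSEQ_D[OF lim_a, of "eps/3"] eps by auto
    show "\<exists>no. \<forall>n\<ge>no. norm (E n - 0) < eps"
    proof (intro exI allI impI)
      fix n assume n: "n \<ge> max (max N1 N2) 1"
      have b: "E n \<le> errB n + 2 / r * hZ r ^ n / ln 2 + (eps/3 + bm * hC (eps/3) te ^ n)"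
        using n eps te by (intro Ebound) auto
      have nN: "n \<ge> N1" "n \<ge> N2" using n by auto
      have "norm (errB n + 2 / r * hZ r ^ n / ln 2 - 0) < eps/3" using N1 nN by blast
      then have "errB n + 2 / r * hZ r ^ n / ln 2 < eps/3"
        unfolding real_norm_def diff_zero by (rule le_less_trans[OF abs_ge_self])
      moreover have "norm (bm * hC (eps/3) te ^ n - 0) < eps/3" using N2 nN by blast
      then have "bm * hC (eps/3) te ^ n < eps/3"
        unfolding real_norm_def diff_zero by (rule le_less_trans[OF abs_ge_self])
      ultimately show "norm (E n - 0) < eps" using b E0[of n] by simp
    qed
  qed
  have "\<forall>n. \<exists>cb. cb \<in> CB n \<and> Phi n cb \<le> E n"
  proof
    fix n
    show "\<exists>cb. cb \<in> CB n \<and> Phi n cb \<le> E n"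
      using exists_le_avg[OF finite_CB[of n], where p="Pcb n" and f="Phi n"] Pcb0 Pcb1 unfolding E_def EE_def by auto
  qed
  then obtain cbs where cbs: "\<And>n. cbs n \<in> CB n" "\<And>n. Phi n (cbs n) \<le> E n" by metis
  define C where "C n = code n (cbs n)" for n
  have ok: "code_ok (C n)" for n unfolding C_def code_ok_def is_pmf_def by simp
  have errle: "err n (cbs n) \<le> E n" for n using cbs(2)[of n] D0[of n "cbs n"] unfolding Phi_def by simp
  have Dle: "Dv n (cbs n) \<le> E n" for n using cbs(2)[of n] err0[of n "cbs n"] unfolding Phi_def by simp
  have ctle: "ct n (cbs n) \<le> B + E n" for n using cbs(2)[of n] err0[of n "cbs n"] D0[of n "cbs n"] unfolding Phi_def by simp
  have l_err: "(\<lambda>n. err_prob PS W n R RK (C n)) \<longlonglongrightarrow> 0"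
    by (rule tendsto_sandwich[of "\<lambda>_. 0" _ _ E]) (use err0 errle limE in \<open>auto simp: C_def err_def\<close>)
  have l_D: "(\<lambda>n. rel_entropy (seqs n) (warden_dist PS W n R RK (C n)) (prodn n (Q0 PS W x0))) \<longlonglongrightarrow> 0"
    by (rule tendsto_sandwich[of "\<lambda>_. 0" _ _ E]) (use D0 Dle limE in \<open>auto simp: C_def Dv_def\<close>)
  have "limsup (\<lambda>n. ereal (exp_cost PS b n R RK (C n))) \<le> limsup (\<lambda>n. ereal (B + E n))"
    by (intro Limsup_mono always_eventually allI) (use ctle in \<open>simp add: C_def ct_def\<close>)
  also have "limsup (\<lambda>n. ereal (B + E n)) = ereal B"
  proof (rule lim_imp_Limsup)
    show "\<not> trivial_limit (sequentially :: nat filter)" by simp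
    have "(\<lambda>n. B + E n) \<longlonglongrightarrow> B + 0" by (intro tendsto_add tendsto_const limE)
    then show "(\<lambda>n. ereal (B + E n)) \<longlonglongrightarrow> ereal B" by (simp add: tendsto_ereal)
  qed
  finally have l_c: "limsup (\<lambda>n. ereal (exp_cost PS b n R RK (C n))) \<le> ereal B" .
  show ?thesis unfolding achievable_causal_def
    using ok l_err l_D l_c by blast
qed

end



theorem theorem2:
  fixes PS :: "'s::finite \<Rightarrow> real"
    and W :: "'s \<Rightarrow> 'x::finite \<Rightarrow> 'y::finite \<Rightarrow> 'z::finite \<Rightarrow> real"
    and x0 :: 'x and b :: "'x \<Rightarrow> real" and RK B :: real
    and V :: "nat set" and PV :: "nat \<Rightarrow> real" and xf :: "nat \<Rightarrow> 's \<Rightarrow> 'x"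
  assumes "is_pmf PS UNIV"
    and "is_channel W"
    and "\<forall>z. Q0 PS W x0 z > 0"
    and "\<forall>x. b x \<ge> 0"
    and "RK \<ge> 0" and "B \<ge> 0"
    and "finite V"
    and "card V \<le> min (card (UNIV :: 'x set) + card (UNIV :: 'y set) + card (UNIV :: 'z set) - 1) ((card (UNIV :: 'x set) - 1) * card (UNIV :: 's set) + 2)"
    and "is_pmf PV V"
    and "\<forall>z. (\<Sum>v\<in>V. PVZ PS W PV xf v z) = Q0 PS W x0 z"
    and "(\<Sum>v\<in>V. \<Sum>s\<in>UNIV. PV v * PS s * b (xf v s)) \<le> B"
    and "mutual_info V UNIV (PVZ PS W PV xf) - mutual_info V UNIV (PVY PS W PV xf) < RK"
  shows "ereal (mutual_info V UNIV (PVY PS W PV xf)) \<le> covert_capacity_causal PS W x0 b RK B"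
proof -
  let ?IY = "mutual_info V UNIV (PVY PS W PV xf)"
  let ?IZ = "mutual_info V UNIV (PVZ PS W PV xf)"
  let ?S = "{R. achievable_causal PS W x0 b RK B R}"
  interpret S: setting PS W x0 b RK B V PV xf
    by unfold_locales (use assms in auto)
  have ach: "achievable_causal PS W x0 b RK B R"
    if "0 \<le> R" "?IZ < R + RK" "R = 0 \<or> (R < \<gamma> \<and> \<gamma> < ?IY)" for R \<gamma>
  proof -
    interpret A: ach PS W x0 b RK B V PV xf R \<gamma>
      by unfold_locales (use that in \<open>auto simp: S.IZ_def S.IY_def\<close>)
    show ?thesis by (rule A.achievable)
  qed
  define m where "m = max (?IZ - RK) 0"
  have capdef: "covert_capacity_causal PS W x0 b RK B = Sup (ereal ` ?S)"
    unfolding covert_capacity_causal_def ..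
  show ?thesis
  proof (cases "m < ?IY")
    case True
    have mem: "R \<in> ?S" if "m < R" "R < ?IY" for R
      using that by (intro CollectI ach[of R "(R + ?IY) / 2"]) (auto simp: m_def)
    show ?thesis unfolding capdef le_Sup_iff
    proof (intro allI impI)
      fix y assume y: "y < ereal ?IY"
      show "\<exists>a\<in>ereal ` ?S. y < a"
      proof (cases y)
        case (real y')
        define R where "R = (max y' m + ?IY) / 2"
        have "y' < ?IY" using y real by simp
        then have "m < R" "R < ?IY" "y' < R" using True unfolding R_def by auto
        then show ?thesis using mem real by (intro bexI[of _ "ereal R"]) auto
      next
        case PInf then show ?thesis using y by simp
      next
        case MInf
        define R where "R = (m + ?IY) / 2"
        have "m < R" "R < ?IY" using True unfolding R_def by auto
        then show ?thesis using mem MInf by (intro bexI[of _ "ereal R"]) auto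
      qed
    qed
  next
    case False
    have "?IZ - RK < ?IY" using assms(12) by simp
    then have IY0: "?IY \<le> 0" and IZ: "?IZ < 0 + RK" using False unfolding m_def by auto
    have "0 \<in> ?S" using ach[of 0 0] IZ by simp
    then have "ereal 0 \<le> Sup (ereal ` ?S)" by (intro Sup_upper) auto
    then show ?thesis unfolding capdef using IY0 by (meson ereal_less_eq(3) order_trans)
  qed
qed


end
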